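(* Let $1\le k<n$ be integers and $K=\{p\in[0,1]^n:\sum_i p_i=k\}$. There exists a sampling procedure which, given only sample access to $n$ coins of unknown biases $p=(p_1,\dots,p_n)\in K$ (independent Bernoulli($p_i$) flips of coin $i$, as many as desired) together with independent auxiliary coins of known biases, terminates almost surely for every $p\in K$ (including points on the boundary of $[0,1]^n$) and outputs a random subset $U\subseteq[n]$ with $|U|=k$ such that $\mathbb{P}[i\in U]=p_i$ for every $i\in[n]$. *)

theory Defs
  imports "HOL-Analysis.Analysis"
begin

text \<open>A sampling procedure with coin access is modelled as an adaptive strategy:
  given the history of all coin outcomes observed so far (a list of booleans), it
  decides either to flip unknown coin i, to flip an auxiliary coin of known bias q,
  or to stop and output a set.\<close>

datatype action = Flip nat | Aux real | Stop "nat set"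

type_synonym procedure = "bool list \<Rightarrow> action"

definition step_prob :: "procedure \<Rightarrow> (nat \<Rightarrow> real) \<Rightarrow> bool list \<Rightarrow> bool \<Rightarrow> real" where
  "step_prob \<sigma> p h b =
     (case \<sigma> h of
        Flip i \<Rightarrow> (if b then p i else 1 - p i)
      | Aux q \<Rightarrow> (if b then q else 1 - q)
      | Stop U \<Rightarrow> 0)"

definition reach_prob :: "procedure \<Rightarrow> (nat \<Rightarrow> real) \<Rightarrow> bool list \<Rightarrow> real" where
  "reach_prob \<sigma> p h = (\<Prod>j<length h. step_prob \<sigma> p (take j h) (h ! j))"

definition is_stop :: "action \<Rightarrow> bool" where
  "is_stop a \<longleftrightarrow> (\<exists>U. a = Stop U)"

definition wf_procedure :: "nat \<Rightarrow> procedure \<Rightarrow> bool" where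
  "wf_procedure n \<sigma> \<longleftrightarrow>
     (\<forall>h i. \<sigma> h = Flip i \<longrightarrow> i < n) \<and>
     (\<forall>h q. \<sigma> h = Aux q \<longrightarrow> 0 \<le> q \<and> q \<le> 1)"

end

theory Submission
  imports Defs
begin


datatype 'a gact = GFlip nat | GAux real | GRet 'a

type_synonym 'a gp = "bool list \<Rightarrow> 'a gact"

definition isret :: "'a gact \<Rightarrow> bool" where
  "isret a = (case a of GRet _ \<Rightarrow> True | _ \<Rightarrow> False)"

definition rv :: "'a gact \<Rightarrow> 'a" where
  "rv a = (case a of GRet x \<Rightarrow> x | _ \<Rightarrow> undefined)"

definition cast :: "'a gact \<Rightarrow> 'b gact" where
  "cast a = (case a of GFlip i \<Rightarrow> GFlip i | GAux q \<Rightarrow> GAux q | GRet _ \<Rightarrow> GRet undefined)"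

definition aprob :: "'a gact \<Rightarrow> (nat \<Rightarrow> real) \<Rightarrow> bool \<Rightarrow> real" where
  "aprob a p b = (case a of GFlip i \<Rightarrow> (if b then p i else 1 - p i)
      | GAux q \<Rightarrow> (if b then q else 1 - q) | GRet _ \<Rightarrow> 0)"

definition gstep :: "'a gp \<Rightarrow> (nat \<Rightarrow> real) \<Rightarrow> bool list \<Rightarrow> bool \<Rightarrow> real" where
  "gstep P p h b = aprob (P h) p b"

definition greach :: "'a gp \<Rightarrow> (nat \<Rightarrow> real) \<Rightarrow> bool list \<Rightarrow> real" where
  "greach P p h = (\<Prod>j<length h. gstep P p (take j h) (h ! j))"

lemma isret_GRet[simp]: "isret (GRet x)" and isret_GFlip[simp]: "\<not> isret (GFlip i)"
  and isret_GAux[simp]: "\<not> isret (GAux q)"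
  by (auto simp: isret_def)

lemma rv_GRet[simp]: "rv (GRet x) = x" by (simp add: rv_def)

lemma isret_iff: "isret a \<longleftrightarrow> (\<exists>x. a = GRet x)"
  by (cases a) auto

lemma aprob_cast: "\<not> isret a \<Longrightarrow> aprob (cast a) p b = aprob a p b"
  by (cases a) (auto simp: cast_def aprob_def)

lemma cast_not_ret: "\<not> isret a \<Longrightarrow> \<not> isret (cast a)"
  by (cases a) (auto simp: cast_def)

lemma aprob_ret[simp]: "aprob (GRet x) p b = 0" by (simp add: aprob_def)

lemma greach_Nil[simp]: "greach P p [] = 1"
  by (simp add: greach_def)

lemma greach_snoc: "greach P p (h @ [b]) = greach P p h * gstep P p h b"
proof -
  have "greach P p (h @ [b]) = (\<Prod>j<Suc (length h). gstep P p (take j (h @ [b])) ((h @ [b]) ! j))"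
    by (simp add: greach_def)
  also have "\<dots> = (\<Prod>j<length h. gstep P p (take j (h @ [b])) ((h @ [b]) ! j)) * gstep P p h b"
    by (simp add: prod.lessThan_Suc)
  also have "(\<Prod>j<length h. gstep P p (take j (h @ [b])) ((h @ [b]) ! j)) = greach P p h"
    unfolding greach_def by (rule prod.cong) (auto simp: nth_append)
  finally show ?thesis .
qed

lemma greach_append: "greach P p (h1 @ h2) = greach P p h1 * greach (\<lambda>h. P (h1 @ h)) p h2"
proof (induction h2 rule: rev_induct)
  case Nil
  then show ?case by simp
next
  case (snoc b h2)
  have "greach P p (h1 @ h2 @ [b]) = greach P p (h1 @ h2) * gstep P p (h1 @ h2) b"
    using greach_snoc[of P p "h1 @ h2" b] by simp
  also have "\<dots> = greach P p h1 * (greach (\<lambda>h. P (h1 @ h)) p h2 * gstep (\<lambda>h. P (h1 @ h)) p h2 b)"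
    using snoc by (simp add: gstep_def)
  also have "\<dots> = greach P p h1 * greach (\<lambda>h. P (h1 @ h)) p (h2 @ [b])"
    by (simp add: greach_snoc)
  finally show ?case by simp
qed

lemma greach_Cons: "greach P p (b # t) = gstep P p [] b * greach (\<lambda>h. P (b # h)) p t"
  using greach_append[of P p "[b]" t] by (simp add: greach_def)

lemma greach_zero_prefix:
  assumes "j < length h" "isret (P (take j h))"
  shows "greach P p h = 0"
proof -
  have "gstep P p (take j h) (h ! j) = 0"
    using assms(2) by (auto simp: gstep_def isret_iff)
  then show ?thesis
    unfolding greach_def using assms(1) by (intro prod_zero) auto
qed

definition NN :: "'a gp \<Rightarrow> (nat \<Rightarrow> real) \<Rightarrow> bool" where
  "NN P p \<longleftrightarrow> (\<forall>h b. 0 \<le> gstep P p h b)"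

lemma greach_nonneg: "NN P p \<Longrightarrow> 0 \<le> greach P p h"
  unfolding greach_def NN_def by (intro prod_nonneg) auto

lemma gstep_sum_le: "gstep P p h True + gstep P p h False \<le> 1"
  by (cases "P h") (auto simp: gstep_def aprob_def)


definition fret :: "'a gp \<Rightarrow> bool list \<Rightarrow> bool" where
  "fret P h \<longleftrightarrow> isret (P h) \<and> (\<forall>j<length h. \<not> isret (P (take j h)))"

definition gbind :: "'a gp \<Rightarrow> ('a \<Rightarrow> 'b gp) \<Rightarrow> 'b gp" where
  "gbind P Q h = (if \<exists>j\<le>length h. isret (P (take j h))
      then (let j = (LEAST j. isret (P (take j h))) in Q (rv (P (take j h))) (drop j h))
      else cast (P h))"

lemma bind_fret:
  assumes "fret P h1" "P h1 = GRet x"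
  shows "gbind P Q (h1 @ h2) = Q x h2"
proof -
  have ex: "\<exists>j\<le>length (h1 @ h2). isret (P (take j (h1 @ h2)))"
    using assms by (intro exI[of _ "length h1"]) (auto simp: fret_def)
  have L: "(LEAST j. isret (P (take j (h1 @ h2)))) = length h1"
  proof (rule Least_equality)
    show "isret (P (take (length h1) (h1 @ h2)))" using assms by (simp add: fret_def)
  next
    fix y assume "isret (P (take y (h1 @ h2)))"
    then show "length h1 \<le> y"
    proof (rule contrapos_pp)
      assume "\<not> length h1 \<le> y"
      then have "y < length h1" by simp
      then show "\<not> isret (P (take y (h1 @ h2)))"
        using assms(1) by (simp add: fret_def)
    qed
  qed
  show ?thesis using ex L assms by (simp add: gbind_def)
qed

lemma bind_noret:
  assumes "\<forall>j\<le>length h. \<not> isret (P (take j h))"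
  shows "gbind P Q h = cast (P h)"
proof -
  have "\<not> (\<exists>j\<le>length h. isret (P (take j h)))" using assms by auto
  then show ?thesis unfolding gbind_def by (rule if_not_P)
qed

lemma greach_bind_pre:
  assumes "\<forall>j<length h. \<not> isret (P (take j h))"
  shows "greach (gbind P Q) p h = greach P p h"
  unfolding greach_def
proof (rule prod.cong[OF refl])
  fix j assume j: "j \<in> {..<length h}"
  have "\<forall>i\<le>length (take j h). \<not> isret (P (take i (take j h)))"
    using assms j by (auto simp: min_def)
  then have "gbind P Q (take j h) = cast (P (take j h))" by (rule bind_noret)
  moreover have "\<not> isret (P (take j h))" using assms j by auto
  ultimately show "gstep (gbind P Q) p (take j h) (h ! j) = gstep P p (take j h) (h ! j)"
    by (simp add: gstep_def aprob_cast)
qed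

lemma greach_bind:
  assumes "fret P h1" "P h1 = GRet x"
  shows "greach (gbind P Q) p (h1 @ h2) = greach P p h1 * greach (Q x) p h2"
proof -
  have "greach (gbind P Q) p h1 = greach P p h1"
    using assms by (intro greach_bind_pre) (auto simp: fret_def)
  moreover have "(\<lambda>h. gbind P Q (h1 @ h)) = Q x"
    using bind_fret[OF assms] by auto
  ultimately show ?thesis by (simp add: greach_append)
qed

lemma bind_decomp:
  assumes "isret (gbind P Q h)"
  shows "\<exists>h1 h2 x. h = h1 @ h2 \<and> fret P h1 \<and> P h1 = GRet x \<and> gbind P Q h = Q x h2"
proof (cases "\<exists>j\<le>length h. isret (P (take j h))")
  case True
  define j where "j = (LEAST j. isret (P (take j h)))"
  from True obtain j0 where j0: "j0 \<le> length h" "isret (P (take j0 h))" by auto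
  have jr: "isret (P (take j h))" unfolding j_def using j0(2) by (rule LeastI)
  have jle: "j \<le> j0" unfolding j_def using j0(2) by (rule Least_le)
  have fr: "fret P (take j h)"
    unfolding fret_def
  proof (intro conjI allI impI)
    show "isret (P (take j h))" by (rule jr)
  next
    fix i assume "i < length (take j h)"
    then have ij: "i < j" by simp
    then have "\<not> isret (P (take i h))" unfolding j_def by (rule not_less_Least)
    then show "\<not> isret (P (take i (take j h)))" using ij by (simp add: min_def)
  qed
  obtain x where x: "P (take j h) = GRet x" using jr by (auto simp: isret_iff)
  have "gbind P Q h = gbind P Q (take j h @ drop j h)" by simp
  also have "\<dots> = Q x (drop j h)" using fr x by (rule bind_fret)
  finally show ?thesis using fr x by (intro exI[of _ "take j h"] exI[of _ "drop j h"] exI[of _ x]) auto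
next
  case False
  then have "gbind P Q h = cast (P h)" by (intro bind_noret) auto
  moreover have "\<not> isret (P h)" using False by (metis order_refl take_all)
  ultimately show ?thesis using assms cast_not_ret by metis
qed

lemma bind_act:
  "(\<exists>h'. \<not> isret (P h') \<and> gbind P Q h = cast (P h')) \<or> (\<exists>h1 h2 x. P h1 = GRet x \<and> gbind P Q h = Q x h2)"
proof (cases "\<exists>j\<le>length h. isret (P (take j h))")
  case True
  then show ?thesis
  proof -
    define j where "j = (LEAST j. isret (P (take j h)))"
    from True obtain j0 where j0: "isret (P (take j0 h))" by auto
    have jr: "isret (P (take j h))" unfolding j_def using j0 by (rule LeastI)
    then obtain x where x: "P (take j h) = GRet x" by (auto simp: isret_iff)
    have "gbind P Q h = Q x (drop j h)" using True x by (simp add: gbind_def j_def[symmetric])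
    then show ?thesis using x by blast
  qed
next
  case False
  then have "gbind P Q h = cast (P h)" by (intro bind_noret) auto
  moreover have "\<not> isret (P h)" using False by (metis order_refl take_all)
  ultimately show ?thesis by auto
qed

lemma fret_unique:
  assumes "fret P h1" "fret P h1'" "h1 @ h2 = h1' @ h2'"
  shows "h1 = h1'"
proof -
  have t1: "take (length h1) (h1 @ h2) = h1" by simp
  have t2: "take (length h1') (h1' @ h2') = h1'" by simp
  have "length h1 = length h1'"
  proof (rule ccontr)
    assume "length h1 \<noteq> length h1'"
    then consider "length h1 < length h1'" | "length h1' < length h1" by linarith
    then show False
    proof cases
      case 1
      then have "take (length h1) h1' = h1"
        using t1 assms(3) by (metis less_imp_le take_append take_all take_take min.absorb1 t2)
      then show False using assms(1,2) 1 by (auto simp: fret_def)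
    next
      case 2
      then have "take (length h1') h1 = h1'"
        using t2 assms(3) by (metis less_imp_le take_append take_all take_take min.absorb1 t1)
      then show False using assms(1,2) 2 by (auto simp: fret_def)
    qed
  qed
  then show ?thesis using t1 t2 assms(3) by metis
qed


definition HS :: "'a gp \<Rightarrow> (nat \<Rightarrow> real) \<Rightarrow> 'a set \<Rightarrow> ('a \<Rightarrow> real) \<Rightarrow> bool" where
  "HS P p S f \<longleftrightarrow> finite S \<and> (\<forall>x\<in>S. (greach P p has_sum f x) {h. P h = GRet x})
     \<and> (\<forall>h x. P h = GRet x \<longrightarrow> x \<notin> S \<longrightarrow> greach P p h = 0)"

lemma HS_fret:
  assumes "HS P p S f" "x \<in> S"
  shows "(greach P p has_sum f x) {h. fret P h \<and> P h = GRet x}"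
proof -
  have "(greach P p has_sum f x) {h. P h = GRet x}" using assms by (auto simp: HS_def)
  moreover have "greach P p h = 0" if "h \<in> {h. P h = GRet x} - {h. fret P h \<and> P h = GRet x}" for h
  proof -
    from that obtain j where "j < length h" "isret (P (take j h))" by (auto simp: fret_def)
    then show ?thesis by (rule greach_zero_prefix)
  qed
  ultimately show ?thesis
    by (subst (asm) has_sum_cong_neutral[where T="{h. fret P h \<and> P h = GRet x}" and g="greach P p"]) auto
qed

lemma HS_zero:
  assumes "HS P p S f" "NN P p" "P h = GRet x" "x \<notin> S \<or> f x = 0"
  shows "greach P p h = 0"
proof (cases "x \<in> S")
  case True
  then have "f x = 0" using assms(4) by auto
  moreover have "(greach P p has_sum f x) {h. P h = GRet x}" using assms(1) True by (auto simp: HS_def)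
  ultimately show ?thesis
    using assms(3) by (intro nonneg_has_sum_le_0D[where A="{h. P h = GRet x}" and a="f x"])
      (auto intro: greach_nonneg[OF assms(2)])
next
  case False
  then show ?thesis using assms by (auto simp: HS_def)
qed

lemma NN_bind:
  assumes "NN P p" "\<And>x. NN (Q x) p"
  shows "NN (gbind P Q) p"
  unfolding NN_def
proof (intro allI)
  fix h b
  from bind_act[of P Q h] show "0 \<le> gstep (gbind P Q) p h b"
  proof
    assume "\<exists>h'. \<not> isret (P h') \<and> gbind P Q h = cast (P h')"
    then obtain h' where "\<not> isret (P h')" "gbind P Q h = cast (P h')" by blast
    then show ?thesis using assms(1) by (auto simp: NN_def gstep_def aprob_cast)
  next
    assume "\<exists>h1 h2 x. P h1 = GRet x \<and> gbind P Q h = Q x h2"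
    then obtain h2 x where "gbind P Q h = Q x h2" by blast
    then show ?thesis using assms(2)[of x] by (auto simp: NN_def gstep_def)
  qed
qed

theorem HS_bind:
  assumes NP: "NN P p" and NQ: "\<And>x. NN (Q x) p" and HP: "HS P p S f"
    and HQ: "\<And>x. x \<in> S \<Longrightarrow> f x \<noteq> 0 \<Longrightarrow> HS (Q x) p T (g x)" and fT: "finite T"
  shows "HS (gbind P Q) p T (\<lambda>y. \<Sum>x\<in>S. f x * g x y)"
proof -
  have finS: "finite S" using HP by (simp add: HS_def)
  define S' where "S' = {x\<in>S. f x \<noteq> 0}"
  have finS': "finite S'" using finS by (simp add: S'_def)
  have zP: "greach P p h1 = 0" if "P h1 = GRet x" "x \<notin> S'" for h1 x
    using HS_zero[OF HP NP that(1)] that(2) by (auto simp: S'_def)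
  have NB: "NN (gbind P Q) p" using NP NQ by (rule NN_bind)
  define app :: "bool list \<times> bool list \<Rightarrow> bool list" where "app = (\<lambda>(h1, h2). h1 @ h2)"
  have main: "(greach (gbind P Q) p has_sum (\<Sum>x\<in>S. f x * g x y)) {h. gbind P Q h = GRet y}"
    if yT: "y \<in> T" for y
  proof -
    define C where "C x = Sigma {h1. fret P h1 \<and> P h1 = GRet x} (\<lambda>_. {h2. Q x h2 = GRet y})" for x
    have Cx: "(greach (gbind P Q) p has_sum (f x * g x y)) (app ` C x)" if xS': "x \<in> S'" for x
    proof -
      have xS: "x \<in> S" and fx: "f x \<noteq> 0" using xS' by (auto simp: S'_def)
      have HQx: "HS (Q x) p T (g x)" using HQ[OF xS fx] .
      have hq: "(greach (Q x) p has_sum g x y) {h2. Q x h2 = GRet y}"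
        using HQx yT by (auto simp: HS_def)
      have hp: "(greach P p has_sum f x) {h1. fret P h1 \<and> P h1 = GRet x}"
        using HS_fret[OF HP xS] .
      define F where "F = (\<lambda>(h1, h2). greach P p h1 * greach (Q x) p h2)"
      have F1: "((\<lambda>h2. F (h1, h2)) has_sum greach P p h1 * g x y) {h2. Q x h2 = GRet y}" for h1
        unfolding F_def using has_sum_cmult_right[OF hq] by simp
      have F2: "((\<lambda>h1. greach P p h1 * g x y) has_sum f x * g x y) {h1. fret P h1 \<and> P h1 = GRet x}"
        using has_sum_cmult_left[OF hp] .
      have Fnn: "0 \<le> F (h1, h2)" for h1 h2
        unfolding F_def using greach_nonneg[OF NP] greach_nonneg[OF NQ] by (simp add: mult_nonneg_nonneg)
      have Fsum: "F summable_on C x"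
        unfolding C_def
        by (rule summable_on_SigmaI[OF F1]) (use F2 has_sum_imp_summable Fnn in auto)
      have FC: "(F has_sum f x * g x y) (C x)"
        unfolding C_def by (rule has_sum_SigmaI[OF F1 F2]) (use Fsum C_def in simp)
      have inj: "inj_on app (C x)"
      proof (rule inj_onI)
        fix a b assume "a \<in> C x" "b \<in> C x" "app a = app b"
        then obtain a1 a2 b1 b2 where ab: "a = (a1, a2)" "b = (b1, b2)" "fret P a1" "fret P b1"
            "a1 @ a2 = b1 @ b2"
          by (cases a, cases b) (auto simp: C_def app_def)
        then have "a1 = b1" using fret_unique by blast
        then show "a = b" using ab by simp
      qed
      have eq: "(greach (gbind P Q) p \<circ> app) z = F z" if "z \<in> C x" for z
        using that by (auto simp: C_def app_def F_def greach_bind)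
      have "((greach (gbind P Q) p \<circ> app) has_sum f x * g x y) (C x)"
        using FC by (subst has_sum_cong[OF eq]) auto
      then show ?thesis using has_sum_reindex[OF inj] by blast
    qed
    have disj: "app ` C x \<inter> app ` C x' = {}" if "x \<in> S'" "x' \<in> S'" "x \<noteq> x'" for x x'
    proof (rule ccontr)
      assume "app ` C x \<inter> app ` C x' \<noteq> {}"
      then obtain a1 a2 b1 b2 where "fret P a1" "P a1 = GRet x" "fret P b1" "P b1 = GRet x'"
          "a1 @ a2 = b1 @ b2"
        by (auto simp: C_def app_def)
      then show False using fret_unique that(3) by (metis gact.inject(3))
    qed
    have U: "(greach (gbind P Q) p has_sum (\<Sum>x\<in>S'. f x * g x y)) (\<Union>x\<in>S'. app ` C x)"
      by (rule sum_has_sum[OF finS' Cx disj]) auto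
    have sub: "(\<Union>x\<in>S'. app ` C x) \<subseteq> {h. gbind P Q h = GRet y}"
      by (auto simp: C_def app_def bind_fret)
    have rest: "greach (gbind P Q) p h = 0"
      if "h \<in> {h. gbind P Q h = GRet y} - (\<Union>x\<in>S'. app ` C x)" for h
    proof -
      from that have r: "gbind P Q h = GRet y" and nu: "h \<notin> (\<Union>x\<in>S'. app ` C x)" by auto
      obtain h1 h2 x where d: "h = h1 @ h2" "fret P h1" "P h1 = GRet x" "gbind P Q h = Q x h2"
        using bind_decomp[of P Q h] r by auto
      have "x \<notin> S'"
      proof
        assume "x \<in> S'"
        then have "h \<in> app ` C x" using d r by (auto simp: C_def app_def image_iff)
        then show False using nu \<open>x \<in> S'\<close> by blast
      qed
      then have "greach P p h1 = 0" using zP d(3) by blast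
      then show ?thesis using d by (simp add: greach_bind)
    qed
    have "(greach (gbind P Q) p has_sum (\<Sum>x\<in>S'. f x * g x y)) {h. gbind P Q h = GRet y}"
      using U by (subst (asm) has_sum_cong_neutral[where T="{h. gbind P Q h = GRet y}" and g="greach (gbind P Q) p"])
        (use sub rest in auto)
    moreover have "(\<Sum>x\<in>S'. f x * g x y) = (\<Sum>x\<in>S. f x * g x y)"
      unfolding S'_def using finS by (intro sum.mono_neutral_left) auto
    ultimately show ?thesis by simp
  qed
  have zero: "greach (gbind P Q) p h = 0" if "gbind P Q h = GRet y" "y \<notin> T" for h y
  proof -
    have "isret (gbind P Q h)" using that(1) by simp
    then obtain h1 h2 x where d: "h = h1 @ h2" "fret P h1" "P h1 = GRet x" "gbind P Q h = Q x h2"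
      using bind_decomp[of P Q h] by blast
    show ?thesis
    proof (cases "x \<in> S'")
      case True
      then have "HS (Q x) p T (g x)" using HQ by (auto simp: S'_def)
      moreover have "Q x h2 = GRet y" using d(4) that(1) by simp
      ultimately have "greach (Q x) p h2 = 0" using that(2) unfolding HS_def by blast
      then show ?thesis using d by (simp add: greach_bind)
    next
      case False
      then have "greach P p h1 = 0" using zP d(3) by blast
      then show ?thesis using d by (simp add: greach_bind)
    qed
  qed
  show ?thesis unfolding HS_def using fT main zero by blast
qed


definition gret :: "'a \<Rightarrow> 'a gp" where "gret x = (\<lambda>h. GRet x)"

definition gprim :: "bool gact \<Rightarrow> bool gp" where
  "gprim a = (\<lambda>h. if h = [] then a else GRet (hd h))"

lemma greach_gret: "greach (gret x) p h = (if h = [] then 1 else 0)"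
  by (cases h) (auto simp: greach_Cons gstep_def gret_def)

lemma HS_gret:
  assumes "finite S" "x \<in> S"
  shows "HS (gret x) p S (\<lambda>y. if y = x then 1 else 0)"
proof -
  have "(greach (gret x) p has_sum 1) UNIV"
  proof -
    have "(greach (gret x) p has_sum 1) {[]}" by (rule has_sum_finiteI) (simp_all add: greach_gret)
    then show ?thesis
      by (subst (asm) has_sum_cong_neutral[where T=UNIV and g="greach (gret x) p"])
        (auto simp: greach_gret)
  qed
  then show ?thesis using assms unfolding HS_def by (auto simp: gret_def)
qed

lemma greach_gprim: "greach (gprim a) p h = (if h = [] then 1 else if tl h = [] then aprob a p (hd h) else 0)"
proof (cases h)
  case Nil then show ?thesis by simp
next
  case (Cons b t)
  have "(\<lambda>h. gprim a (b # h)) = gret b" by (auto simp: gprim_def gret_def)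
  then show ?thesis using Cons by (simp add: greach_Cons greach_gret gstep_def gprim_def)
qed

lemma HS_gprim:
  assumes "\<not> isret a"
  shows "HS (gprim a) p UNIV (\<lambda>b. aprob a p b)"
  unfolding HS_def
proof (intro conjI ballI allI impI)
  show "finite (UNIV :: bool set)" by simp
next
  fix b :: bool
  have "(greach (gprim a) p has_sum aprob a p b) {[b]}" by (rule has_sum_finiteI) (simp_all add: greach_gprim)
  moreover have "{h. gprim a h = GRet b} = {h. h \<noteq> [] \<and> hd h = b}"
    using assms by (auto simp: gprim_def)
  ultimately show "(greach (gprim a) p has_sum aprob a p b) {h. gprim a h = GRet b}"
    by (subst has_sum_cong_neutral[where T="{[b]}" and g="greach (gprim a) p"])
      (auto simp: greach_gprim neq_Nil_conv)
qed auto

definition AOK :: "'a gp \<Rightarrow> nat \<Rightarrow> bool" where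
  "AOK P n \<longleftrightarrow> (\<forall>h i q. (P h = GFlip i \<longrightarrow> i < n) \<and> (P h = GAux q \<longrightarrow> 0 \<le> q \<and> q \<le> 1))"

lemma NN_AOK:
  assumes "AOK P n" "\<forall>i<n. 0 \<le> p i \<and> p i \<le> 1"
  shows "NN P p"
  unfolding NN_def gstep_def
proof (intro allI)
  fix h b show "0 \<le> aprob (P h) p b"
    using assms by (cases "P h") (auto simp: AOK_def aprob_def)
qed

lemma AOK_cast: "\<not> isret a \<Longrightarrow> AOK (\<lambda>h. a) n \<Longrightarrow> (cast a = GFlip i \<longrightarrow> i < n) \<and> (cast a = GAux q \<longrightarrow> 0 \<le> q \<and> q \<le> 1)"
  by (cases a) (auto simp: cast_def AOK_def)

lemma AOK_gret: "AOK (gret x) n" by (simp add: AOK_def gret_def)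

lemma AOK_flip: "i < n \<Longrightarrow> AOK (gprim (GFlip i)) n" by (auto simp: AOK_def gprim_def)
lemma AOK_aux: "0 \<le> q \<Longrightarrow> q \<le> 1 \<Longrightarrow> AOK (gprim (GAux q)) n" by (auto simp: AOK_def gprim_def)

lemma AOK_bind:
  assumes "AOK P n" "\<And>x. AOK (Q x) n"
  shows "AOK (gbind P Q) n"
  unfolding AOK_def
proof (intro allI conjI impI)
  fix h i q
  from bind_act[of P Q h]
  have "(\<exists>h'. \<not> isret (P h') \<and> gbind P Q h = cast (P h')) \<or> (\<exists>h1 h2 x. P h1 = GRet x \<and> gbind P Q h = Q x h2)" .
  then have c: "(\<forall>i q. (gbind P Q h = GFlip i \<longrightarrow> i < n) \<and> (gbind P Q h = GAux q \<longrightarrow> 0 \<le> q \<and> q \<le> 1))"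
  proof
    assume "\<exists>h'. \<not> isret (P h') \<and> gbind P Q h = cast (P h')"
    then obtain h' where h': "\<not> isret (P h')" "gbind P Q h = cast (P h')" by blast
    show ?thesis using assms(1) h' by (cases "P h'") (auto simp: AOK_def cast_def)
  next
    assume "\<exists>h1 h2 x. P h1 = GRet x \<and> gbind P Q h = Q x h2"
    then obtain h2 x where "gbind P Q h = Q x h2" by blast
    then show ?thesis using assms(2)[of x] by (auto simp: AOK_def)
  qed
  show "gbind P Q h = GFlip i \<Longrightarrow> i < n" using c by blast
  show "gbind P Q h = GAux q \<Longrightarrow> 0 \<le> q" using c by blast
  show "gbind P Q h = GAux q \<Longrightarrow> q \<le> 1" using c by blast
qed

definition RV :: "'a gp \<Rightarrow> ('a \<Rightarrow> bool) \<Rightarrow> bool" where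
  "RV P R \<longleftrightarrow> (\<forall>h x. P h = GRet x \<longrightarrow> R x)"

lemma RV_gret: "R x \<Longrightarrow> RV (gret x) R" by (simp add: RV_def gret_def)

lemma RV_bind:
  assumes "RV P A" "\<And>x. A x \<Longrightarrow> RV (Q x) R"
  shows "RV (gbind P Q) R"
  unfolding RV_def
proof (intro allI impI)
  fix h y assume r: "gbind P Q h = GRet y"
  then have "isret (gbind P Q h)" by simp
  then obtain h1 h2 x where d: "fret P h1" "P h1 = GRet x" "gbind P Q h = Q x h2"
    using bind_decomp[of P Q h] by blast
  have "A x" using assms(1) d(2) by (auto simp: RV_def)
  then show "R y" using assms(2)[of x] d(3) r by (auto simp: RV_def)
qed

lemma HS_cong: "HS P p S f \<Longrightarrow> (\<And>x. x \<in> S \<Longrightarrow> f x = f' x) \<Longrightarrow> HS P p S f'"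
  by (auto simp: HS_def)

lemma HS_mono:
  assumes "HS P p S f" "NN P p" "S \<subseteq> S'" "finite S'"
  shows "HS P p S' (\<lambda>x. if x \<in> S then f x else 0)"
  unfolding HS_def
proof (intro conjI ballI allI impI)
  fix x assume "x \<in> S'"
  show "(greach P p has_sum (if x \<in> S then f x else 0)) {h. P h = GRet x}"
  proof (cases "x \<in> S")
    case True then show ?thesis using assms(1) by (auto simp: HS_def)
  next
    case False
    then have "greach P p h = 0" if "P h = GRet x" for h using assms(1) that by (auto simp: HS_def)
    then show ?thesis using False by (auto intro!: has_sum_0)
  qed
next
  fix h x assume "P h = GRet x" "x \<notin> S'"
  then show "greach P p h = 0" using assms(1,3) by (auto simp: HS_def)
qed (use assms in auto)

lemma HS_set:
  assumes "HS P p S f"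
  shows "(greach P p has_sum (\<Sum>x\<in>S \<inter> A. f x)) {h. \<exists>x\<in>A. P h = GRet x}"
proof -
  have fin: "finite (S \<inter> A)" using assms by (auto simp: HS_def)
  have "(greach P p has_sum (\<Sum>x\<in>S \<inter> A. f x)) (\<Union>x\<in>S \<inter> A. {h. P h = GRet x})"
    by (rule sum_has_sum[OF fin]) (use assms in \<open>auto simp: HS_def\<close>)
  then show ?thesis
    by (subst (asm) has_sum_cong_neutral[where T="{h. \<exists>x\<in>A. P h = GRet x}" and g="greach P p"])
      (use assms in \<open>auto simp: HS_def\<close>)
qed


lemma least_le_len:
  assumes "\<exists>j\<le>length h. isret (P (take j h))"
  shows "(LEAST j. isret (P (take j h))) \<le> length h"
proof -
  from assms obtain j0 where "j0 \<le> length h" "isret (P (take j0 h))" by auto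
  then show ?thesis by (meson Least_le order_trans)
qed

function gloop :: "'a option gp \<Rightarrow> 'a gp" where
  "gloop P h = (if \<exists>j\<le>length h. isret (P (take j h))
     then (let j = (LEAST j. isret (P (take j h))) in
       (case rv (P (take j h)) of Some x \<Rightarrow> GRet x
        | None \<Rightarrow> (if j = 0 then GRet undefined else gloop P (drop j h))))
     else cast (P h))"
  by pat_completeness auto
termination
proof (relation "Wellfounded.measure (\<lambda>(P, h). length h)")
  show "wf (Wellfounded.measure (\<lambda>(P, h). length h))" by simp
next
  fix P :: "'a option gp" and h x
  assume a: "\<exists>j\<le>length h. isret (P (take j h))" "x = (LEAST j. isret (P (take j h)))" "x \<noteq> 0"
  have "x \<le> length h" using least_le_len[OF a(1)] a(2) by simp
  then show "((P, drop x h), P, h) \<in> Wellfounded.measure (\<lambda>(P, h). length h)" using a(3) by auto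
qed

declare gloop.simps[simp del]

definition lk :: "'a option gp \<Rightarrow> 'a option \<Rightarrow> 'a gp" where
  "lk P r = (case r of Some x \<Rightarrow> gret x | None \<Rightarrow> gloop P)"

lemma loop_unfold:
  assumes nr: "\<not> isret (P [])"
  shows "gloop P h = gbind P (lk P) h"
proof (cases "\<exists>j\<le>length h. isret (P (take j h))")
  case True
  define j where "j = (LEAST j. isret (P (take j h)))"
  have "j \<noteq> 0"
  proof
    assume "j = 0"
    from True obtain j0 where "isret (P (take j0 h))" by auto
    then have "isret (P (take j h))" unfolding j_def by (rule LeastI)
    then show False using nr \<open>j = 0\<close> by simp
  qed
  then show ?thesis using True
    by (subst gloop.simps) (auto simp: gbind_def j_def[symmetric] lk_def gret_def split: option.split)
next
  case False
  then have a: "gloop P h = cast (P h)" by (subst gloop.simps) (rule if_not_P)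
  from False have "gbind P (lk P) h = cast (P h)" unfolding gbind_def by (rule if_not_P)
  with a show ?thesis by simp
qed

lemma loop_eq: "\<not> isret (P []) \<Longrightarrow> gloop P = gbind P (lk P)"
  using loop_unfold by blast


lemma bind_act2:
  "(\<exists>h'. \<not> isret (P h') \<and> gbind P Q h = cast (P h')) \<or>
   (\<exists>h1 h2 x. h = h1 @ h2 \<and> fret P h1 \<and> P h1 = GRet x \<and> gbind P Q h = Q x h2)"
proof (cases "\<exists>j\<le>length h. isret (P (take j h))")
  case True
  define j where "j = (LEAST j. isret (P (take j h)))"
  from True obtain j0 where j0: "j0 \<le> length h" "isret (P (take j0 h))" by auto
  have jr: "isret (P (take j h))" unfolding j_def using j0(2) by (rule LeastI)
  have fr: "fret P (take j h)"
    unfolding fret_def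
  proof (intro conjI allI impI)
    show "isret (P (take j h))" by (rule jr)
  next
    fix i assume "i < length (take j h)"
    then have ij: "i < j" by simp
    then have "\<not> isret (P (take i h))" unfolding j_def by (rule not_less_Least)
    then show "\<not> isret (P (take i (take j h)))" using ij by (simp add: min_def)
  qed
  obtain x where x: "P (take j h) = GRet x" using jr by (auto simp: isret_iff)
  have "gbind P Q h = gbind P Q (take j h @ drop j h)" by simp
  also have "\<dots> = Q x (drop j h)" using fr x by (rule bind_fret)
  finally have "gbind P Q h = Q x (drop j h)" .
  then have "h = take j h @ drop j h \<and> fret P (take j h) \<and> P (take j h) = GRet x \<and> gbind P Q h = Q x (drop j h)"
    using fr x by simp
  then show ?thesis by blast
next
  case False
  then have "gbind P Q h = cast (P h)" by (intro bind_noret) auto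
  moreover have "\<not> isret (P h)" using False by (metis order_refl take_all)
  ultimately show ?thesis by blast
qed

lemma fret_nonempty: "\<not> isret (P []) \<Longrightarrow> fret P h1 \<Longrightarrow> h1 \<noteq> []"
  by (auto simp: fret_def)

lemma AOK_loop:
  assumes A: "AOK P n" and nr: "\<not> isret (P [])"
  shows "AOK (gloop P) n"
proof -
  have "(\<forall>i q. (gloop P h = GFlip i \<longrightarrow> i < n) \<and> (gloop P h = GAux q \<longrightarrow> 0 \<le> q \<and> q \<le> 1))" for h
  proof (induction h rule: length_induct)
    case (1 h)
    have e: "gloop P h = gbind P (lk P) h" using nr by (rule loop_unfold)
    from bind_act2[of P "lk P" h] show ?case
    proof
      assume "\<exists>h'. \<not> isret (P h') \<and> gbind P (lk P) h = cast (P h')"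
      then obtain h' where h': "\<not> isret (P h')" "gbind P (lk P) h = cast (P h')" by blast
      show ?thesis using A h' e by (cases "P h'") (auto simp: AOK_def cast_def)
    next
      assume "\<exists>h1 h2 x. h = h1 @ h2 \<and> fret P h1 \<and> P h1 = GRet x \<and> gbind P (lk P) h = lk P x h2"
      then obtain h1 h2 x where d: "h = h1 @ h2" "fret P h1" "gbind P (lk P) h = lk P x h2" by blast
      have "h1 \<noteq> []" using fret_nonempty[OF nr d(2)] .
      then have lt: "length h2 < length h" using d(1) by simp
      show ?thesis
      proof (cases x)
        case None
        then show ?thesis using 1 lt e d(3) by (auto simp: lk_def)
      next
        case (Some y)
        then show ?thesis using e d(3) by (auto simp: lk_def gret_def)
      qed
    qed
  qed
  then show ?thesis by (auto simp: AOK_def)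
qed

lemma RV_loop:
  assumes R: "RV P (\<lambda>r. case r of None \<Rightarrow> True | Some x \<Rightarrow> R x)" and nr: "\<not> isret (P [])"
  shows "RV (gloop P) R"
proof -
  have "\<forall>y. gloop P h = GRet y \<longrightarrow> R y" for h
  proof (induction h rule: length_induct)
    case (1 h)
    show ?case
    proof (intro allI impI)
      fix y assume r: "gloop P h = GRet y"
      have e: "gloop P h = gbind P (lk P) h" using nr by (rule loop_unfold)
      have "gbind P (lk P) h = GRet y" using r e by simp
      then have "isret (gbind P (lk P) h)" by simp
      then obtain h1 h2 x where d: "h = h1 @ h2" "fret P h1" "P h1 = GRet x" "gbind P (lk P) h = lk P x h2"
        using bind_decomp[of P "lk P" h] by blast
      have "h1 \<noteq> []" using fret_nonempty[OF nr d(2)] .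
      then have lt: "length h2 < length h" using d(1) by simp
      show "R y"
      proof (cases x)
        case None
        then have "gloop P h2 = GRet y" using e d(4) r by (simp add: lk_def)
        then show ?thesis using 1 lt by blast
      next
        case (Some z)
        then have "z = y" using e d(4) r by (simp add: lk_def gret_def)
        moreover have "R z"
        proof -
          have "P h1 = GRet (Some z)" using d(3) Some by simp
          then have "(case Some z of None \<Rightarrow> True | Some x \<Rightarrow> R x)" using R unfolding RV_def by blast
          then show ?thesis by simp
        qed
        ultimately show ?thesis by simp
      qed
    qed
  qed
  then show ?thesis by (auto simp: RV_def)
qed

lemma kraft:
  assumes "NN P p" "finite F" "\<forall>h\<in>F. \<forall>t. h @ t \<in> F \<longrightarrow> t = []" "\<forall>h\<in>F. length h \<le> N"
  shows "(\<Sum>h\<in>F. greach P p h) \<le> 1"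
  using assms
proof (induction N arbitrary: P F)
  case 0
  then have "F \<subseteq> {[]}" by auto
  then have "(\<Sum>h\<in>F. greach P p h) \<le> (\<Sum>h\<in>{[]}. greach P p h)"
    by (intro sum_mono2) (auto intro: greach_nonneg[OF 0(1)])
  then show ?case by simp
next
  case (Suc M)
  show ?case
  proof (cases "[] \<in> F")
    case True
    have "h = []" if "h \<in> F" for h
    proof -
      from Suc.prems(3) True have "\<forall>t. [] @ t \<in> F \<longrightarrow> t = []" by blast
      then show ?thesis using that by simp
    qed
    then have "F = {[]}" using True by blast
    then show ?thesis by simp
  next
    case False
    define FT where "FT = {t. True # t \<in> F}"
    define FF where "FF = {t. False # t \<in> F}"
    have Fdec: "F = Cons True ` FT \<union> Cons False ` FF"
    proof
      show "F \<subseteq> Cons True ` FT \<union> Cons False ` FF"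
      proof
        fix h assume "h \<in> F"
        then obtain b t where "h = b # t" using False by (cases h) auto
        then show "h \<in> Cons True ` FT \<union> Cons False ` FF" using \<open>h \<in> F\<close>
          by (cases b) (auto simp: FT_def FF_def)
      qed
    qed (auto simp: FT_def FF_def)
    have finT: "finite FT" unfolding FT_def
      using finite_vimageI[OF Suc.prems(2), of "Cons True"] by (simp add: vimage_def)
    have finF: "finite FF" unfolding FF_def
      using finite_vimageI[OF Suc.prems(2), of "Cons False"] by (simp add: vimage_def)
    have bnd: "(\<Sum>t\<in>{t. b # t \<in> F}. greach (\<lambda>h. P (b # h)) p t) \<le> 1" for b
    proof (rule Suc.IH)
      show "NN (\<lambda>h. P (b # h)) p" using Suc.prems(1) by (auto simp: NN_def gstep_def)
      show "finite {t. b # t \<in> F}"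
        using finite_vimageI[OF Suc.prems(2), of "Cons b"] by (simp add: vimage_def)
      show "\<forall>h\<in>{t. b # t \<in> F}. \<forall>t. h @ t \<in> {t. b # t \<in> F} \<longrightarrow> t = []"
        using Suc.prems(3) by auto
      show "\<forall>h\<in>{t. b # t \<in> F}. length h \<le> M"
      proof
        fix h assume "h \<in> {t. b # t \<in> F}"
        then have "length (b # h) \<le> Suc M" using Suc.prems(4) by blast
        then show "length h \<le> M" by simp
      qed
    qed
    have "(\<Sum>h\<in>F. greach P p h) = (\<Sum>h\<in>Cons True ` FT. greach P p h) + (\<Sum>h\<in>Cons False ` FF. greach P p h)"
      unfolding Fdec by (rule sum.union_disjoint) (use finT finF in auto)
    also have "(\<Sum>h\<in>Cons True ` FT. greach P p h) = gstep P p [] True * (\<Sum>t\<in>FT. greach (\<lambda>h. P (True # h)) p t)"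
      by (subst sum.reindex) (auto simp: greach_Cons sum_distrib_left)
    also have "(\<Sum>h\<in>Cons False ` FF. greach P p h) = gstep P p [] False * (\<Sum>t\<in>FF. greach (\<lambda>h. P (False # h)) p t)"
      by (subst sum.reindex) (auto simp: greach_Cons sum_distrib_left)
    also have "gstep P p [] True * (\<Sum>t\<in>FT. greach (\<lambda>h. P (True # h)) p t) \<le> gstep P p [] True * 1"
      using bnd[of True] Suc.prems(1) unfolding FT_def by (intro mult_left_mono) (auto simp: NN_def)
    also have "gstep P p [] False * (\<Sum>t\<in>FF. greach (\<lambda>h. P (False # h)) p t) \<le> gstep P p [] False * 1"
      using bnd[of False] Suc.prems(1) unfolding FF_def by (intro mult_left_mono) (auto simp: NN_def)
    finally show ?thesis using gstep_sum_le[of P p "[]"] by linarith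
  qed
qed


lemma fret_sum_bound:
  assumes NL: "NN L p" and G: "finite G" "G \<subseteq> {h. isret (L h)}"
  shows "(\<Sum>h\<in>G. greach L p h) \<le> 1"
proof -
  define G' where "G' = {h\<in>G. fret L h}"
  have "(\<Sum>h\<in>G. greach L p h) = (\<Sum>h\<in>G'. greach L p h)"
  proof (rule sum.mono_neutral_right)
    show "finite G" by (rule G(1))
    show "G' \<subseteq> G" by (auto simp: G'_def)
    show "\<forall>h\<in>G - G'. greach L p h = 0"
    proof
      fix h assume "h \<in> G - G'"
      then obtain j where "j < length h" "isret (L (take j h))"
        using G(2) by (auto simp: G'_def fret_def)
      then show "greach L p h = 0" by (rule greach_zero_prefix)
    qed
  qed
  also have "\<dots> \<le> 1"
  proof (rule kraft[OF NL])
    show "finite G'" using G(1) by (auto simp: G'_def)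
    show "\<forall>h\<in>G'. \<forall>t. h @ t \<in> G' \<longrightarrow> t = []"
    proof (intro ballI allI impI)
      fix h t assume h: "h \<in> G'" and ht: "h @ t \<in> G'"
      show "t = []"
      proof (rule ccontr)
        assume "t \<noteq> []"
        then have "length h < length (h @ t)" by simp
        moreover have "isret (L (take (length h) (h @ t)))" using h by (simp add: G'_def fret_def)
        ultimately show False using ht unfolding G'_def fret_def by blast
      qed
    qed
    show "\<forall>h\<in>G'. length h \<le> Max (length ` G')"
      using G(1) by (auto simp: G'_def intro!: Max_ge)
  qed
  finally show ?thesis .
qed

theorem HS_loop:
  assumes A: "AOK P n" and pr: "\<forall>i<n. 0 \<le> p i \<and> p i \<le> 1" and nr: "\<not> isret (P [])"
    and H: "HS P p (insert None (Some ` S)) f" and F1: "f None < 1" and fS: "finite S"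
  shows "HS (gloop P) p S (\<lambda>x. f (Some x) / (1 - f None))"
proof -
  have NP: "NN P p" by (rule NN_AOK[OF A pr])
  have AL: "AOK (gloop P) n" by (rule AOK_loop[OF A nr])
  have NL: "NN (gloop P) p" by (rule NN_AOK[OF AL pr])
  have eq: "gloop P = gbind P (lk P)" using nr by (rule loop_eq)
  have zeroL: "\<forall>y. gloop P h = GRet y \<longrightarrow> y \<notin> S \<longrightarrow> greach (gloop P) p h = 0" for h
  proof (induction h rule: length_induct)
    case (1 h)
    show ?case
    proof (intro allI impI)
      fix y assume r: "gloop P h = GRet y" and yS: "y \<notin> S"
      have "gbind P (lk P) h = GRet y" using r eq by simp
      then have "isret (gbind P (lk P) h)" by simp
      then obtain h1 h2 x where d: "h = h1 @ h2" "fret P h1" "P h1 = GRet x" "gbind P (lk P) h = lk P x h2"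
        using bind_decomp[of P "lk P" h] by blast
      have gr: "greach (gloop P) p h = greach P p h1 * greach (lk P x) p h2"
        using d eq by (simp add: greach_bind)
      have "h1 \<noteq> []" using fret_nonempty[OF nr d(2)] .
      then have lt: "length h2 < length h" using d(1) by simp
      show "greach (gloop P) p h = 0"
      proof (cases "x \<in> insert None (Some ` S)")
        case False
        then have "greach P p h1 = 0" using H d(3) by (auto simp: HS_def)
        then show ?thesis using gr by simp
      next
        case True
        then consider "x = None" | z where "x = Some z" "z \<in> S" by auto
        then show ?thesis
        proof cases
          case 1
          then have "gloop P h2 = GRet y" using d(4) r eq by (simp add: lk_def)
          then have "greach (gloop P) p h2 = 0" using "1.IH" lt yS by blast
          then show ?thesis using gr 1 by (simp add: lk_def)
        next
          case 2
          then have "gret z h2 = GRet y" using d(4) r eq by (simp add: lk_def)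
          then have "z = y" by (simp add: gret_def)
          then show ?thesis using 2 yS by simp
        qed
      qed
    qed
  qed
  define T where "T y = infsum (greach (gloop P) p) {h. gloop P h = GRet y}" for y
  have summ: "greach (gloop P) p summable_on {h. gloop P h = GRet y}" for y
  proof (rule nonneg_bdd_above_summable_on)
    show "\<And>x. x \<in> {h. gloop P h = GRet y} \<Longrightarrow> 0 \<le> greach (gloop P) p x"
      using greach_nonneg[OF NL] by blast
    show "bdd_above (sum (greach (gloop P) p) ` {F. F \<subseteq> {h. gloop P h = GRet y} \<and> finite F})"
    proof (rule bdd_aboveI[where M=1])
      fix s assume "s \<in> sum (greach (gloop P) p) ` {F. F \<subseteq> {h. gloop P h = GRet y} \<and> finite F}"
      then obtain G where "s = sum (greach (gloop P) p) G" "finite G" "G \<subseteq> {h. gloop P h = GRet y}" by auto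
      moreover have "G \<subseteq> {h. isret (gloop P h)}" using calculation(3) by auto
      ultimately show "s \<le> 1" using fret_sum_bound[OF NL] by auto
    qed
  qed
  have HL: "HS (gloop P) p S T"
    unfolding HS_def T_def using fS summ zeroL by (auto simp: summable_iff_has_sum_infsum)
  define g where "g r = (case r of Some x \<Rightarrow> (\<lambda>y. if y = x then 1 else 0) | None \<Rightarrow> T)" for r
  have HK: "HS (lk P r) p S (g r)" if "r \<in> insert None (Some ` S)" "f r \<noteq> 0" for r
  proof (cases r)
    case None then show ?thesis using HL by (simp add: lk_def g_def)
  next
    case (Some x)
    then have "x \<in> S" using that(1) by auto
    then show ?thesis using Some HS_gret[OF fS] by (simp add: lk_def g_def)
  qed
  have NK: "NN (lk P r) p" for r
    using NL by (cases r) (auto simp: lk_def NN_def gstep_def gret_def aprob_def)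
  have HB: "HS (gbind P (lk P)) p S (\<lambda>y. \<Sum>r\<in>insert None (Some ` S). f r * g r y)"
    by (rule HS_bind[OF NP NK H HK fS])
  have Teq: "T y = f None * T y + f (Some y)" if yS: "y \<in> S" for y
  proof -
    have "(greach (gloop P) p has_sum T y) {h. gloop P h = GRet y}" using HL yS by (auto simp: HS_def)
    moreover have "(greach (gloop P) p has_sum (\<Sum>r\<in>insert None (Some ` S). f r * g r y)) {h. gloop P h = GRet y}"
      using HB yS eq by (auto simp: HS_def)
    ultimately have "T y = (\<Sum>r\<in>insert None (Some ` S). f r * g r y)" by (rule has_sum_unique)
    also have "\<dots> = f None * T y + (\<Sum>r\<in>Some ` S. f r * g r y)"
      using fS by (subst sum.insert) (auto simp: g_def)
    also have "(\<Sum>r\<in>Some ` S. f r * g r y) = (\<Sum>x\<in>S. f (Some x) * (if y = x then 1 else 0))"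
      by (subst sum.reindex) (auto simp: g_def)
    also have "\<dots> = (\<Sum>x\<in>S. if y = x then f (Some x) else 0)" by (rule sum.cong) auto
    also have "\<dots> = f (Some y)" using fS yS by (simp add: sum.delta)
    finally show ?thesis .
  qed
  show ?thesis
  proof (rule HS_cong[OF HL])
    fix y assume "y \<in> S"
    then have "T y * (1 - f None) = f (Some y)" using Teq by (simp add: algebra_simps)
    then show "T y = f (Some y) / (1 - f None)" using F1 by (simp add: field_simps)
  qed
qed


abbreviation gflip :: "nat \<Rightarrow> bool gp" where "gflip i \<equiv> gprim (GFlip i)"
abbreviation gaux :: "real \<Rightarrow> bool gp" where "gaux q \<equiv> gprim (GAux q)"

lemma bind_Nil: "gbind P Q [] = (if isret (P []) then Q (rv (P [])) [] else cast (P []))"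
  by (auto simp: gbind_def)

lemma NN_gret: "NN (gret x) p" by (simp add: NN_def gstep_def gret_def aprob_def)

lemma sum_UNIV_bool: "(\<Sum>c\<in>(UNIV::bool set). F c) = F True + F False"
  by (simp add: UNIV_bool add.commute)

primrec unif :: "nat \<Rightarrow> nat gp" where
  "unif 0 = gret 0"
| "unif (Suc m) = gbind (gaux (1 / real (Suc m))) (\<lambda>c. if c then gret m else unif m)"

declare unif.simps[simp del]

lemma AOK_unif: "AOK (unif m) n"
proof (induction m)
  case 0 then show ?case by (simp add: AOK_gret unif.simps)
next
  case (Suc m)
  show ?case unfolding unif.simps
    by (rule AOK_bind) (auto intro: AOK_aux AOK_gret Suc simp: field_simps)
qed

lemma RV_unif: "RV (unif (Suc m)) (\<lambda>b. b < Suc m)"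
proof (induction m)
  case 0
  show ?case unfolding unif.simps
    by (rule RV_bind[where A="\<lambda>_. True"]) (auto simp: RV_def gret_def)
next
  case (Suc m)
  have IH: "unif (Suc m) h = GRet x \<Longrightarrow> x < Suc (Suc m)" for h x
    using Suc unfolding RV_def by (metis less_SucI)
  show ?case unfolding unif.simps(2)[of "Suc m"]
    by (rule RV_bind[where A="\<lambda>_. True"]) (auto simp: RV_def gret_def IH)
qed

lemma HS_unif:
  assumes pr: "\<forall>i<n. 0 \<le> p i \<and> p i \<le> 1"
  shows "HS (unif (Suc m)) p {..<Suc m} (\<lambda>_. 1 / real (Suc m))"
proof (induction m)
  case 0
  have "HS (unif (Suc 0)) p {..<Suc 0}
      (\<lambda>y. \<Sum>c\<in>UNIV. aprob (GAux (1 / real (Suc 0)) :: bool gact) p c * (if y = 0 then 1 else 0))"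
    unfolding unif.simps(2)
  proof (rule HS_bind)
    show "NN (gaux (1 / real (Suc 0))) p" by (rule NN_AOK[OF AOK_aux pr]) auto
    show "NN (if c then gret 0 else unif 0) p" for c by (simp add: NN_gret unif.simps)
    show "HS (gaux (1 / real (Suc 0))) p UNIV (aprob (GAux (1 / real (Suc 0)) :: bool gact) p)"
      using HS_gprim[of "GAux (1 / real (Suc 0))" p] by simp
    show "HS (if c then gret 0 else unif 0) p {..<Suc 0} (\<lambda>y. if y = 0 then 1 else 0)" for c
      using HS_gret[of "{..<Suc 0}" 0 p] by (simp add: unif.simps)
  qed simp
  then show ?case by (rule HS_cong) (simp add: sum_UNIV_bool aprob_def)
next
  case (Suc m)
  define q where "q = 1 / real (Suc (Suc m))"
  define g where "g c = (if c then (\<lambda>y. if y = Suc m then 1 else 0)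
      else (\<lambda>y. if y \<in> {..<Suc m} then 1 / real (Suc m) else 0))" for c
  have "HS (unif (Suc (Suc m))) p {..<Suc (Suc m)} (\<lambda>y. \<Sum>c\<in>UNIV. aprob (GAux q :: bool gact) p c * g c y)"
    unfolding unif.simps(2)[of "Suc m"] q_def[symmetric]
  proof (rule HS_bind)
    show "NN (gaux q) p" by (rule NN_AOK[OF AOK_aux pr]) (auto simp: q_def)
    show "NN (if c then gret (Suc m) else unif (Suc m)) p" for c
      by (auto intro: NN_AOK[OF _ pr] AOK_unif simp: NN_gret)
    show "HS (gaux q) p UNIV (aprob (GAux q :: bool gact) p)" using HS_gprim[of "GAux q" p] by simp
    show "HS (if c then gret (Suc m) else unif (Suc m)) p {..<Suc (Suc m)} (g c)" for c
    proof (cases c)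
      case True then show ?thesis using HS_gret[of "{..<Suc (Suc m)}" "Suc m" p] by (simp add: g_def)
    next
      case False
      have "HS (unif (Suc m)) p {..<Suc (Suc m)} (\<lambda>x. if x \<in> {..<Suc m} then 1 / real (Suc m) else 0)"
        by (rule HS_mono[OF Suc]) (auto intro: NN_AOK[OF AOK_unif pr])
      then show ?thesis using False by (simp add: g_def)
    qed
  qed simp
  then show ?case
  proof (rule HS_cong)
    fix y assume "y \<in> {..<Suc (Suc m)}"
    then consider "y = Suc m" | "y < Suc m" by (auto simp: less_Suc_eq)
    then show "(\<Sum>c\<in>UNIV. aprob (GAux q :: bool gact) p c * g c y) = 1 / real (Suc (Suc m))"
    proof cases
      case 1 then show ?thesis by (simp add: sum_UNIV_bool aprob_def g_def q_def)
    next
      case 2 then show ?thesis by (simp add: sum_UNIV_bool aprob_def g_def q_def field_simps)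
    qed
  qed
qed


definition wt :: "(nat \<Rightarrow> real) \<Rightarrow> nat \<Rightarrow> nat set \<Rightarrow> real" where
  "wt p m X = (\<Prod>i<m. if i \<in> X then p i else 1 - p i)"

primrec flipall :: "nat \<Rightarrow> nat set gp" where
  "flipall 0 = gret {}"
| "flipall (Suc m) = gbind (flipall m) (\<lambda>X. gbind (gflip m) (\<lambda>c. gret (if c then insert m X else X)))"

declare flipall.simps[simp del]

lemma AOK_flipall: "m \<le> n \<Longrightarrow> AOK (flipall m) n"
proof (induction m)
  case 0 then show ?case by (simp add: flipall.simps AOK_gret)
next
  case (Suc m)
  show ?case unfolding flipall.simps(2)
    by (intro AOK_bind AOK_flip AOK_gret) (use Suc in auto)
qed

lemma RV_flipall: "RV (flipall m) (\<lambda>X. X \<subseteq> {..<m})"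
proof (induction m)
  case 0 then show ?case by (simp add: flipall.simps RV_gret)
next
  case (Suc m)
  show ?case unfolding flipall.simps(2)
  proof (rule RV_bind[OF Suc])
    fix X :: "nat set" assume "X \<subseteq> {..<m}"
    then show "RV (gbind (gflip m) (\<lambda>c. gret (if c then insert m X else X))) (\<lambda>X. X \<subseteq> {..<Suc m})"
      by (intro RV_bind[where A="\<lambda>_. True"]) (auto simp: RV_def gret_def)
  qed
qed

lemma wt_Suc: "wt p (Suc m) Y = wt p m Y * (if m \<in> Y then p m else 1 - p m)"
  by (simp add: wt_def)

lemma wt_cong: "(\<And>i. i < m \<Longrightarrow> i \<in> X \<longleftrightarrow> i \<in> Y) \<Longrightarrow> wt p m X = wt p m Y"
  unfolding wt_def by (rule prod.cong) auto

lemma sum_wt: "(\<Sum>X\<in>Pow {..<m}. wt p m X) = 1"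
proof (induction m)
  case 0 then show ?case by (simp add: wt_def)
next
  case (Suc m)
  have P: "Pow {..<Suc m} = Pow {..<m} \<union> insert m ` Pow {..<m}"
    by (simp add: lessThan_Suc Pow_insert)
  have inj: "inj_on (insert m) (Pow {..<m})"
  proof (rule inj_onI)
    fix x y assume "x \<in> Pow {..<m}" "y \<in> Pow {..<m}" "insert m x = insert m y"
    moreover have "m \<notin> x" "m \<notin> y" using calculation by auto
    ultimately show "x = y" by (metis Diff_insert_absorb)
  qed
  have "(\<Sum>X\<in>Pow {..<Suc m}. wt p (Suc m) X)
      = (\<Sum>X\<in>Pow {..<m}. wt p (Suc m) X) + (\<Sum>X\<in>insert m ` Pow {..<m}. wt p (Suc m) X)"
    unfolding P by (rule sum.union_disjoint) auto
  also have "(\<Sum>X\<in>insert m ` Pow {..<m}. wt p (Suc m) X) = (\<Sum>X\<in>Pow {..<m}. wt p (Suc m) (insert m X))"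
    by (rule sum.reindex[OF inj, unfolded comp_def])
  also have "(\<Sum>X\<in>Pow {..<m}. wt p (Suc m) (insert m X)) = (\<Sum>X\<in>Pow {..<m}. wt p m X * p m)"
  proof (rule sum.cong[OF refl])
    fix X assume "X \<in> Pow {..<m}"
    then have "wt p m (insert m X) = wt p m X" by (intro wt_cong) auto
    then show "wt p (Suc m) (insert m X) = wt p m X * p m" by (simp add: wt_Suc)
  qed
  also have "(\<Sum>X\<in>Pow {..<m}. wt p (Suc m) X) = (\<Sum>X\<in>Pow {..<m}. wt p m X * (1 - p m))"
    by (rule sum.cong[OF refl]) (auto simp: wt_Suc)
  also have "(\<Sum>X\<in>Pow {..<m}. wt p m X * (1 - p m)) + (\<Sum>X\<in>Pow {..<m}. wt p m X * p m)
      = (\<Sum>X\<in>Pow {..<m}. wt p m X)"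
    by (simp add: sum.distrib[symmetric] algebra_simps)
  finally show ?case using Suc by simp
qed

lemma HS_flipall:
  assumes pr: "\<forall>i<n. 0 \<le> p i \<and> p i \<le> 1"
  shows "m \<le> n \<Longrightarrow> HS (flipall m) p (Pow {..<m}) (wt p m)"
proof (induction m)
  case 0
  have h: "HS (gret {}) p (Pow {..<0::nat}) (\<lambda>y. if y = {} then 1 else 0)" by (rule HS_gret) simp_all
  show ?case unfolding flipall.simps(1) by (rule HS_cong[OF h]) (auto simp: wt_def)
next
  case (Suc m)
  then have mn: "m < n" by simp
  define g where "g X Y = (\<Sum>c\<in>UNIV. aprob (GFlip m :: bool gact) p c *
      (if Y = (if c then insert m X else X) then 1 else 0))" for X Y
  have "HS (flipall (Suc m)) p (Pow {..<Suc m}) (\<lambda>Y. \<Sum>X\<in>Pow {..<m}. wt p m X * g X Y)"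
    unfolding flipall.simps(2)
  proof (rule HS_bind)
    show "NN (flipall m) p" by (rule NN_AOK[OF AOK_flipall pr]) (use mn in simp)
    show "NN (gbind (gflip m) (\<lambda>c. gret (if c then insert m X else X))) p" for X
      by (rule NN_AOK[OF _ pr]) (intro AOK_bind AOK_flip AOK_gret mn)
    show "HS (flipall m) p (Pow {..<m}) (wt p m)" using Suc mn by simp
    show "HS (gbind (gflip m) (\<lambda>c. gret (if c then insert m X else X))) p (Pow {..<Suc m}) (g X)"
      if "X \<in> Pow {..<m}" for X
      unfolding g_def
    proof (rule HS_bind)
      show "NN (gflip m) p" by (rule NN_AOK[OF AOK_flip[OF mn] pr])
      show "NN (gret (if c then insert m X else X)) p" for c by (rule NN_gret)
      show "HS (gflip m) p UNIV (aprob (GFlip m :: bool gact) p)" using HS_gprim[of "GFlip m" p] by simp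
      show "HS (gret (if c then insert m X else X)) p (Pow {..<Suc m})
          (\<lambda>Y. if Y = (if c then insert m X else X) then 1 else 0)" for c
        by (rule HS_gret) (use that in auto)
    qed simp
  qed simp
  then show ?case
  proof (rule HS_cong)
    fix Y assume Y: "Y \<in> Pow {..<Suc m}"
    have gX: "g X Y = (if Y = insert m X then p m else 0) + (if Y = X then 1 - p m else 0)" if "m \<notin> X" for X
      using that by (auto simp: g_def sum_UNIV_bool aprob_def)
    show "(\<Sum>X\<in>Pow {..<m}. wt p m X * g X Y) = wt p (Suc m) Y"
    proof (cases "m \<in> Y")
      case True
      have "(\<Sum>X\<in>Pow {..<m}. wt p m X * g X Y) = (\<Sum>X\<in>Pow {..<m}. if X = Y - {m} then wt p m X * p m else 0)"
      proof (rule sum.cong[OF refl])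
        fix X assume X: "X \<in> Pow {..<m}"
        then have mX: "m \<notin> X" by auto
        have "Y = insert m X \<longleftrightarrow> X = Y - {m}" using True mX by auto
        moreover have "Y \<noteq> X" using True mX by auto
        ultimately show "wt p m X * g X Y = (if X = Y - {m} then wt p m X * p m else 0)"
          using gX[OF mX] by auto
      qed
      also have "\<dots> = wt p m (Y - {m}) * p m"
      proof -
        have "Y - {m} \<in> Pow {..<m}" using Y by (auto simp: less_Suc_eq)
        then show ?thesis by (simp add: sum.delta)
      qed
      also have "wt p m (Y - {m}) = wt p m Y" by (rule wt_cong) auto
      finally show ?thesis using True by (simp add: wt_Suc)
    next
      case False
      have "(\<Sum>X\<in>Pow {..<m}. wt p m X * g X Y) = (\<Sum>X\<in>Pow {..<m}. if X = Y then wt p m X * (1 - p m) else 0)"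
      proof (rule sum.cong[OF refl])
        fix X assume X: "X \<in> Pow {..<m}"
        then have mX: "m \<notin> X" by auto
        have "Y \<noteq> insert m X" using False by auto
        then show "wt p m X * g X Y = (if X = Y then wt p m X * (1 - p m) else 0)"
          using gX[OF mX] by auto
      qed
      also have "\<dots> = wt p m Y * (1 - p m)"
      proof -
        have "Y \<in> Pow {..<m}" using Y False by (auto simp: less_Suc_eq)
        then show ?thesis by (simp add: sum.delta)
      qed
      finally show ?thesis using False by (simp add: wt_Suc)
    qed
  qed
qed


lemma unif_Nil: "\<not> isret (unif (Suc m) [])"
  by (simp add: unif.simps bind_Nil gprim_def cast_def isret_def)

lemma bind_Nil_nonret: "\<not> isret (P []) \<Longrightarrow> \<not> isret (gbind P Q [])"
  by (simp add: bind_Nil cast_not_ret)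

definition raceround :: "nat \<Rightarrow> nat set \<Rightarrow> nat option gp" where
  "raceround n X = gbind (unif n) (\<lambda>a. if a \<in> X \<and> a < n
     then gbind (gflip a) (\<lambda>c. gret (if c then None else Some a)) else gret None)"

definition race :: "nat \<Rightarrow> nat set \<Rightarrow> nat gp" where
  "race n X = gloop (raceround n X)"

lemma AOK_raceround: "AOK (raceround n X) n"
  unfolding raceround_def
  by (intro AOK_bind AOK_unif) (auto intro: AOK_bind AOK_flip AOK_gret)

lemma RV_raceround: "RV (raceround n X) (\<lambda>r. case r of None \<Rightarrow> True | Some a \<Rightarrow> a \<in> X)"
  unfolding raceround_def
proof (rule RV_bind[where A="\<lambda>_. True"])
  show "RV (unif n) (\<lambda>_. True)" by (simp add: RV_def)
next
  fix a :: nat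
  show "RV (if a \<in> X \<and> a < n then gbind (gflip a) (\<lambda>c. gret (if c then None else Some a)) else gret None)
      (\<lambda>r. case r of None \<Rightarrow> True | Some a \<Rightarrow> a \<in> X)"
  proof (cases "a \<in> X \<and> a < n")
    case True
    have "RV (gbind (gflip a) (\<lambda>c. gret (if c then None else Some a))) (\<lambda>r. case r of None \<Rightarrow> True | Some a \<Rightarrow> a \<in> X)"
      by (rule RV_bind[where A="\<lambda>_. True"]) (use True in \<open>auto simp: RV_def gret_def\<close>)
    then show ?thesis using True by simp
  next
    case False then show ?thesis by (subst if_not_P[OF False]) (simp add: RV_def gret_def)
  qed
qed

lemma raceround_Nil: "0 < n \<Longrightarrow> \<not> isret (raceround n X [])"
  unfolding raceround_def by (cases n) (auto intro!: bind_Nil_nonret unif_Nil)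

lemma AOK_race: "0 < n \<Longrightarrow> AOK (race n X) n"
  unfolding race_def by (rule AOK_loop[OF AOK_raceround raceround_Nil])

lemma RV_race: "0 < n \<Longrightarrow> RV (race n X) (\<lambda>a. a \<in> X)"
  unfolding race_def by (rule RV_loop[OF RV_raceround raceround_Nil])

lemma HS_raceround:
  assumes n: "0 < n" and pr: "\<forall>i<n. 0 \<le> p i \<and> p i \<le> 1"
  shows "HS (raceround n X) p (insert None (Some ` {..<n}))
    (\<lambda>r. case r of None \<Rightarrow> (\<Sum>a<n. if a \<in> X then p a else 1) / n
       | Some a \<Rightarrow> (if a \<in> X then (1 - p a) / n else 0))"
proof -
  obtain m where m: "n = Suc m" using n by (cases n) auto
  define T where "T = insert None (Some ` {..<n})"
  define g where "g a = (if a \<in> X \<and> a < n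
      then (\<lambda>y. \<Sum>c\<in>UNIV. aprob (GFlip a :: bool gact) p c * (if y = (if c then None else Some a) then 1 else 0))
      else (\<lambda>y. if y = None then 1 else 0))" for a
  have "HS (raceround n X) p T (\<lambda>y. \<Sum>a\<in>{..<n}. 1 / real n * g a y)"
    unfolding raceround_def
  proof (rule HS_bind)
    show "NN (unif n) p" by (rule NN_AOK[OF AOK_unif pr])
    show "NN (if a \<in> X \<and> a < n then gbind (gflip a) (\<lambda>c. gret (if c then None else Some a)) else gret None) p" for a
      by (rule NN_AOK[OF _ pr]) (auto intro: AOK_bind AOK_flip AOK_gret)
    show "HS (unif n) p {..<n} (\<lambda>_. 1 / real n)" using HS_unif[OF pr, of m] m by simp
    show "finite T" by (simp add: T_def)
    show "HS (if a \<in> X \<and> a < n then gbind (gflip a) (\<lambda>c. gret (if c then None else Some a)) else gret None) p T (g a)"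
      if a: "a \<in> {..<n}" for a
    proof (cases "a \<in> X")
      case False
      then show ?thesis using HS_gret[of T None p] by (simp add: g_def T_def)
    next
      case True
      have "HS (gbind (gflip a) (\<lambda>c. gret (if c then None else Some a))) p T (g a)"
        unfolding g_def using True a
      proof (simp only: if_True simp_thms lessThan_iff, intro HS_bind)
        show "NN (gflip a) p" using a by (intro NN_AOK[OF AOK_flip pr]) simp
        show "NN (gret (if c then None else Some a)) p" for c by (rule NN_gret)
        show "HS (gflip a) p UNIV (aprob (GFlip a :: bool gact) p)" using HS_gprim[of "GFlip a" p] by simp
        show "HS (gret (if c then None else Some a)) p T (\<lambda>y. if y = (if c then None else Some a) then 1 else 0)" for c
          by (rule HS_gret) (use a in \<open>auto simp: T_def\<close>)
        show "finite T" by (simp add: T_def)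
      qed
      then show ?thesis using True a by simp
    qed
  qed
  then show ?thesis unfolding T_def[symmetric]
  proof (rule HS_cong)
    fix y assume "y \<in> T"
    then consider "y = None" | b where "y = Some b" "b < n" by (auto simp: T_def)
    then show "(\<Sum>a\<in>{..<n}. 1 / real n * g a y) = (case y of None \<Rightarrow> (\<Sum>a<n. if a \<in> X then p a else 1) / n
       | Some a \<Rightarrow> (if a \<in> X then (1 - p a) / n else 0))"
    proof cases
      case 1
      have "(\<Sum>a\<in>{..<n}. 1 / real n * g a y) = (\<Sum>a<n. (if a \<in> X then p a else 1) / n)"
        by (rule sum.cong) (auto simp: g_def 1 sum_UNIV_bool aprob_def)
      then show ?thesis using 1 by (simp add: sum_divide_distrib)
    next
      case 2
      have "(\<Sum>a\<in>{..<n}. 1 / real n * g a y) = (\<Sum>a<n. if a = b then (if a \<in> X then (1 - p a) / n else 0) else 0)"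
        by (rule sum.cong) (auto simp: g_def 2 sum_UNIV_bool aprob_def)
      also have "\<dots> = (if b \<in> X then (1 - p b) / n else 0)" using 2 by (simp add: sum.delta)
      finally show ?thesis using 2 by simp
    qed
  qed
qed

lemma HS_race:
  assumes n: "0 < n" and pr: "\<forall>i<n. 0 \<le> p i \<and> p i \<le> 1" and X: "X \<subseteq> {..<n}"
    and s: "0 < (\<Sum>a\<in>X. 1 - p a)"
  shows "HS (race n X) p {..<n} (\<lambda>a. if a \<in> X then (1 - p a) / (\<Sum>a\<in>X. 1 - p a) else 0)"
proof -
  define s where "s = (\<Sum>a\<in>X. 1 - p a)"
  have sum_eq: "(\<Sum>a<n. if a \<in> X then p a else 1) = n - s"
  proof -
    have "(\<Sum>a<n. if a \<in> X then p a else 1) = (\<Sum>a<n. 1 - (if a \<in> X then 1 - p a else 0))"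
      by (rule sum.cong) auto
    also have "\<dots> = n - (\<Sum>a<n. if a \<in> X then 1 - p a else 0)" by (simp add: sum_subtractf)
    also have "(\<Sum>a<n. if a \<in> X then 1 - p a else 0) = s"
    proof -
      have "X \<inter> {..<n} = X" using X by blast
      then show ?thesis unfolding s_def by (simp add: sum.inter_restrict[symmetric] Int_commute)
    qed
    finally show ?thesis .
  qed
  have H: "HS (race n X) p {..<n} (\<lambda>a. (case Some a of None \<Rightarrow> (\<Sum>a<n. if a \<in> X then p a else 1) / n
       | Some a \<Rightarrow> (if a \<in> X then (1 - p a) / n else 0)) /
      (1 - (case None of None \<Rightarrow> (\<Sum>a<n. if a \<in> X then p a else 1) / n
       | Some a \<Rightarrow> (if a \<in> X then (1 - p a) / n else 0))))"
    unfolding race_def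
  proof (rule HS_loop[OF AOK_raceround pr raceround_Nil[OF n] HS_raceround[OF n pr]])
    show "(case None of None \<Rightarrow> (\<Sum>a<n. if a \<in> X then p a else 1) / real n
        | Some a \<Rightarrow> if a \<in> X then (1 - p a) / real n else 0) < 1"
      using sum_eq s n by (simp add: s_def[symmetric] field_simps)
  qed simp
  show ?thesis
  proof (rule HS_cong[OF H])
    fix a assume "a \<in> {..<n}"
    have e: "1 - (\<Sum>a<n. if a \<in> X then p a else 1) / n = s / n" using n sum_eq by (simp add: field_simps)
    have rn: "real n \<noteq> 0" using n by simp
    have e2: "(1 - p a) / real n / (s / real n) = (1 - p a) / s" 
    proof -
      have sp: "s \<noteq> 0" using assms(4) unfolding s_def by simp
      show ?thesis using rn sp by (simp add: field_simps)
    qed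
    show "(case Some a of None \<Rightarrow> (\<Sum>a<n. if a \<in> X then p a else 1) / n
       | Some a \<Rightarrow> (if a \<in> X then (1 - p a) / n else 0)) /
      (1 - (case None of None \<Rightarrow> (\<Sum>a<n. if a \<in> X then p a else 1) / n
       | Some a \<Rightarrow> (if a \<in> X then (1 - p a) / n else 0))) =
      (if a \<in> X then (1 - p a) / (\<Sum>a\<in>X. 1 - p a) else 0)"
      unfolding s_def[symmetric] option.case e using n by (cases "a \<in> X") (simp_all add: e2)
  qed
qed


definition KS :: "nat \<Rightarrow> nat \<Rightarrow> nat set set" where
  "KS n k = {U. U \<subseteq> {..<n} \<and> card U = k}"

lemma finite_KS: "finite (KS n k)"
proof -
  have "KS n k \<subseteq> Pow {..<n}" by (auto simp: KS_def)
  then show ?thesis by (rule finite_subset) simp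
qed

definition branch :: "nat \<Rightarrow> nat \<Rightarrow> nat set \<Rightarrow> nat \<Rightarrow> nat set option gp" where
  "branch n k X b = (if b \<in> X then gbind (gaux (1 / real k)) (\<lambda>c. gret (if c then Some X else None))
     else if b < n then gbind (gflip b) (\<lambda>c. if c then gbind (race n X) (\<lambda>a. gret (Some (insert b (X - {a}))))
                                          else gret None)
     else gret None)"

definition round :: "nat \<Rightarrow> nat \<Rightarrow> nat set option gp" where
  "round n k = gbind (flipall n) (\<lambda>X. if card X = k then gbind (unif n) (branch n k X) else gret None)"

definition alg :: "nat \<Rightarrow> nat \<Rightarrow> nat set gp" where
  "alg n k = gloop (round n k)"

lemma inv_le1: "1 / real k \<le> (1::real)"
  by (cases "k = 0") (auto simp: field_simps)

lemma AOK_branch: "0 < n \<Longrightarrow> AOK (branch n k X b) n"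
  unfolding branch_def
  by (auto intro!: AOK_bind AOK_gret AOK_flip AOK_race AOK_aux simp: inv_le1)

lemma AOK_round: "0 < n \<Longrightarrow> AOK (round n k) n"
  unfolding round_def
  by (auto intro!: AOK_bind AOK_flipall AOK_gret AOK_unif AOK_branch)

lemma round_Nil: "0 < n \<Longrightarrow> \<not> isret (round n k [])"
proof -
  assume n: "0 < n"
  then obtain m where m: "n = Suc m" by (cases n) auto
  have "\<not> isret (flipall (Suc m) [])"
  proof (cases "isret (flipall m [])")
    case True
    then show ?thesis
      by (simp add: flipall.simps(2)[of m] bind_Nil gprim_def cast_def isret_def)
  next
    case False
    then show ?thesis unfolding flipall.simps(2)[of m] by (rule bind_Nil_nonret)
  qed
  then show ?thesis unfolding round_def m by (rule bind_Nil_nonret)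
qed

lemma AOK_alg: "0 < n \<Longrightarrow> AOK (alg n k) n"
  unfolding alg_def by (rule AOK_loop[OF AOK_round round_Nil])

lemma card_swap:
  assumes "finite X" "a \<in> X" "b \<notin> X"
  shows "card (insert b (X - {a})) = card X"
proof -
  have "card (insert b (X - {a})) = Suc (card (X - {a}))" using assms by simp
  also have "\<dots> = card X" by (rule card_Suc_Diff1[OF assms(1,2)])
  finally show ?thesis .
qed

lemma swap_KS:
  assumes "X \<in> KS n k" "a \<in> X" "b \<notin> X" "b < n"
  shows "insert b (X - {a}) \<in> KS n k"
proof -
  have fX: "finite X" using assms(1) by (auto simp: KS_def intro: finite_subset)
  show ?thesis using assms card_swap[OF fX assms(2,3)] by (auto simp: KS_def)
qed

lemma RV_round: "0 < n \<Longrightarrow> RV (round n k) (\<lambda>r. case r of None \<Rightarrow> True | Some U \<Rightarrow> U \<in> KS n k)"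
  unfolding round_def
proof (rule RV_bind[OF RV_flipall])
  assume n: "0 < n"
  fix X :: "nat set" assume X: "X \<subseteq> {..<n}"
  show "RV (if card X = k then gbind (unif n) (branch n k X) else gret None)
      (\<lambda>r. case r of None \<Rightarrow> True | Some U \<Rightarrow> U \<in> KS n k)"
  proof (cases "card X = k")
    case False then show ?thesis by (simp add: RV_def gret_def)
  next
    case True
    then have XK: "X \<in> KS n k" using X by (simp add: KS_def)
    have "RV (gbind (unif n) (branch n k X)) (\<lambda>r. case r of None \<Rightarrow> True | Some U \<Rightarrow> U \<in> KS n k)"
    proof (rule RV_bind[where A="\<lambda>_. True"])
      show "RV (unif n) (\<lambda>_. True)" by (simp add: RV_def)
      fix b
      show "RV (branch n k X b) (\<lambda>r. case r of None \<Rightarrow> True | Some U \<Rightarrow> U \<in> KS n k)"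
      proof (cases "b \<in> X")
        case True
        have "RV (gbind (gaux (1 / real k)) (\<lambda>c. gret (if c then Some X else None)))
            (\<lambda>r. case r of None \<Rightarrow> True | Some U \<Rightarrow> U \<in> KS n k)"
          by (intro RV_bind[where A="\<lambda>_. True"]) (auto simp: RV_def gret_def XK)
        then show ?thesis using True by (simp add: branch_def)
      next
        case bX: False
        show ?thesis
        proof (cases "b < n")
          case False then show ?thesis using bX by (simp add: RV_def gret_def branch_def)
        next
          case bn: True
          have "RV (gbind (gflip b) (\<lambda>c. if c then gbind (race n X) (\<lambda>a. gret (Some (insert b (X - {a})))) else gret None))
              (\<lambda>r. case r of None \<Rightarrow> True | Some U \<Rightarrow> U \<in> KS n k)"
          proof (rule RV_bind[where A="\<lambda>_. True"])
            show "RV (gflip b) (\<lambda>_. True)" by (simp add: RV_def)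
            fix c
            show "RV (if c then gbind (race n X) (\<lambda>a. gret (Some (insert b (X - {a})))) else gret None)
                (\<lambda>r. case r of None \<Rightarrow> True | Some U \<Rightarrow> U \<in> KS n k)"
            proof (cases c)
              case False then show ?thesis by (simp add: RV_def gret_def)
            next
              case True
              have "RV (gbind (race n X) (\<lambda>a. gret (Some (insert b (X - {a})))))
                  (\<lambda>r. case r of None \<Rightarrow> True | Some U \<Rightarrow> U \<in> KS n k)"
                by (rule RV_bind[OF RV_race[OF n]]) (auto simp: RV_def gret_def intro: swap_KS[OF XK _ bX bn])
              then show ?thesis using True by simp
            qed
          qed
          then show ?thesis using bX bn by (simp add: branch_def)
        qed
      qed
    qed
    then show ?thesis using True by simp
  qed
qed

lemma RV_alg: "0 < n \<Longrightarrow> RV (alg n k) (\<lambda>U. U \<in> KS n k)"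
  unfolding alg_def by (rule RV_loop[OF RV_round round_Nil])


definition sX :: "(nat \<Rightarrow> real) \<Rightarrow> nat set \<Rightarrow> real" where
  "sX p X = (\<Sum>a\<in>X. 1 - p a)"

definition ind :: "bool \<Rightarrow> real" where
  "ind P = (if P then 1 else 0)"

definition vC :: "(nat \<Rightarrow> real) \<Rightarrow> nat \<Rightarrow> nat set \<Rightarrow> nat \<Rightarrow> nat set option \<Rightarrow> real" where
  "vC p n X b y = (\<Sum>a<n. (if a \<in> X then (1 - p a) / sX p X else 0) * ind (y = Some (insert b (X - {a}))))"

definition vB :: "(nat \<Rightarrow> real) \<Rightarrow> nat \<Rightarrow> nat \<Rightarrow> nat set \<Rightarrow> nat \<Rightarrow> nat set option \<Rightarrow> real" where
  "vB p n k X b y = (if b \<in> X then (1 / real k) * ind (y = Some X) + (1 - 1 / real k) * ind (y = None)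
     else if b < n then p b * vC p n X b y + (1 - p b) * ind (y = None) else ind (y = None))"

definition vR :: "(nat \<Rightarrow> real) \<Rightarrow> nat \<Rightarrow> nat \<Rightarrow> nat set option \<Rightarrow> real" where
  "vR p n k y = (\<Sum>X\<in>Pow {..<n}. wt p n X *
     (if card X = k then (\<Sum>b<n. 1 / real n * vB p n k X b y) else ind (y = None)))"

lemma KS_sub: "X \<in> KS n k \<Longrightarrow> X \<subseteq> {..<n}" by (simp add: KS_def)
lemma KS_card: "X \<in> KS n k \<Longrightarrow> card X = k" by (simp add: KS_def)
lemma KS_fin: "X \<in> KS n k \<Longrightarrow> finite X" by (auto simp: KS_def intro: finite_subset)

lemma tX:
  assumes X: "X \<in> KS n k" and ps: "(\<Sum>i<n. p i) = real k"
  shows "(\<Sum>b\<in>{..<n} - X. p b) = sX p X"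
proof -
  have "(\<Sum>i<n. p i) = (\<Sum>b\<in>{..<n} - X. p b) + (\<Sum>b\<in>X. p b)"
    using KS_sub[OF X] by (simp add: sum.subset_diff)
  moreover have "sX p X = real k - (\<Sum>b\<in>X. p b)"
    unfolding sX_def using KS_card[OF X] by (simp add: sum_subtractf)
  ultimately show ?thesis using ps by simp
qed

lemma HS_branch:
  assumes n: "0 < n" and pr: "\<forall>i<n. 0 \<le> p i \<and> p i \<le> 1" and ps: "(\<Sum>i<n. p i) = real k"
    and X: "X \<in> KS n k" and b: "b < n"
  shows "HS (branch n k X b) p (insert None (Some ` KS n k)) (vB p n k X b)"
proof -
  define T where "T = insert None (Some ` KS n k)"
  have fT: "finite T" by (simp add: T_def finite_KS)
  show ?thesis
  proof (cases "b \<in> X")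
    case True
    have "HS (gbind (gaux (1 / real k)) (\<lambda>c. gret (if c then Some X else None))) p T
        (\<lambda>y. \<Sum>c\<in>UNIV. aprob (GAux (1 / real k) :: bool gact) p c * (if y = (if c then Some X else None) then 1 else 0))"
    proof (rule HS_bind)
      show "NN (gaux (1 / real k)) p" by (rule NN_AOK[OF AOK_aux pr]) (auto simp: inv_le1)
      show "NN (gret (if c then Some X else None)) p" for c by (rule NN_gret)
      show "HS (gaux (1 / real k)) p UNIV (aprob (GAux (1 / real k) :: bool gact) p)"
        using HS_gprim[of "GAux (1 / real k)" p] by simp
      show "HS (gret (if c then Some X else None)) p T (\<lambda>y. if y = (if c then Some X else None) then 1 else 0)" for c
        by (rule HS_gret[OF fT]) (use X in \<open>auto simp: T_def\<close>)
    qed (rule fT)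
    then show ?thesis unfolding T_def using True
      by (simp add: branch_def) (rule HS_cong, auto simp: vB_def sum_UNIV_bool aprob_def ind_def)
  next
    case bX: False
    define g where "g c = (if c then vC p n X b else (\<lambda>y. ind (y = None)))" for c
    have "HS (gbind (gflip b) (\<lambda>c. if c then gbind (race n X) (\<lambda>a. gret (Some (insert b (X - {a})))) else gret None))
        p T (\<lambda>y. \<Sum>c\<in>UNIV. aprob (GFlip b :: bool gact) p c * g c y)"
    proof (rule HS_bind)
      show "NN (gflip b) p" by (rule NN_AOK[OF AOK_flip[OF b] pr])
      show "NN (if c then gbind (race n X) (\<lambda>a. gret (Some (insert b (X - {a})))) else gret None) p" for c
        by (rule NN_AOK[OF _ pr]) (auto intro!: AOK_bind AOK_race n AOK_gret)
      show "HS (gflip b) p UNIV (aprob (GFlip b :: bool gact) p)" using HS_gprim[of "GFlip b" p] by simp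
      show "HS (if c then gbind (race n X) (\<lambda>a. gret (Some (insert b (X - {a})))) else gret None) p T (g c)"
        if "c \<in> UNIV" "aprob (GFlip b :: bool gact) p c \<noteq> 0" for c
      proof (cases c)
        case False
        then show ?thesis using HS_gret[OF fT, of None p] by (simp add: g_def T_def ind_def)
      next
        case True
        then have pb: "p b \<noteq> 0" using that by (simp add: aprob_def)
        have "0 \<le> p b" using pr b by simp
        then have pb0: "0 < p b" using pb by simp
        have "p b \<le> (\<Sum>b\<in>{..<n} - X. p b)"
          by (rule member_le_sum) (use b bX pr in auto)
        then have s0: "0 < sX p X" using tX[OF X ps] pb0 by simp
        have HR: "HS (race n X) p {..<n} (\<lambda>a. if a \<in> X then (1 - p a) / sX p X else 0)"
          using HS_race[OF n pr KS_sub[OF X]] s0 unfolding sX_def by simp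
        have "HS (gbind (race n X) (\<lambda>a. gret (Some (insert b (X - {a}))))) p T
            (\<lambda>y. \<Sum>a\<in>{..<n}. (if a \<in> X then (1 - p a) / sX p X else 0) *
                   (if y = Some (insert b (X - {a})) then 1 else 0))"
        proof (rule HS_bind[OF _ _ HR _ fT])
          show "NN (race n X) p" by (rule NN_AOK[OF AOK_race[OF n] pr])
          show "NN (gret (Some (insert b (X - {a})))) p" for a by (rule NN_gret)
          show "HS (gret (Some (insert b (X - {a})))) p T (\<lambda>y. if y = Some (insert b (X - {a})) then 1 else 0)"
            if "a \<in> {..<n}" "(if a \<in> X then (1 - p a) / sX p X else 0) \<noteq> 0" for a
          proof (rule HS_gret[OF fT])
            have "a \<in> X" using that(2) by (auto split: if_splits)
            then show "Some (insert b (X - {a})) \<in> T" using swap_KS[OF X _ bX b] by (simp add: T_def)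
          qed
        qed
        then have "HS (gbind (race n X) (\<lambda>a. gret (Some (insert b (X - {a}))))) p T (vC p n X b)"
          by (rule HS_cong) (simp add: vC_def ind_def)
        then show ?thesis using True by (simp add: g_def)
      qed
    qed (rule fT)
    then show ?thesis unfolding T_def using bX b
      by (simp add: branch_def) (rule HS_cong, auto simp: vB_def sum_UNIV_bool aprob_def g_def)
  qed
qed

lemma HS_round:
  assumes n: "0 < n" and pr: "\<forall>i<n. 0 \<le> p i \<and> p i \<le> 1" and ps: "(\<Sum>i<n. p i) = real k"
  shows "HS (round n k) p (insert None (Some ` KS n k)) (vR p n k)"
proof -
  obtain m where m: "n = Suc m" using n by (cases n) auto
  define T where "T = insert None (Some ` KS n k)"
  have fT: "finite T" by (simp add: T_def finite_KS)
  define g where "g X = (\<lambda>y. if card X = k then (\<Sum>b<n. 1 / real n * vB p n k X b y) else ind (y = None))" for X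
  have "HS (round n k) p T (\<lambda>y. \<Sum>X\<in>Pow {..<n}. wt p n X * g X y)"
    unfolding round_def
  proof (rule HS_bind[OF _ _ HS_flipall[OF pr order_refl] _ fT])
    show "NN (flipall n) p" by (rule NN_AOK[OF AOK_flipall pr]) simp
    show "NN (if card X = k then gbind (unif n) (branch n k X) else gret None) p" for X
      by (rule NN_AOK[OF _ pr]) (auto intro!: AOK_bind AOK_unif AOK_branch n AOK_gret)
    show "HS (if card X = k then gbind (unif n) (branch n k X) else gret None) p T (g X)"
      if X: "X \<in> Pow {..<n}" "wt p n X \<noteq> 0" for X
    proof (cases "card X = k")
      case False
      then show ?thesis using HS_gret[OF fT, of None p] by (simp add: g_def T_def ind_def)
    next
      case True
      then have XK: "X \<in> KS n k" using X by (simp add: KS_def)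
      have "HS (gbind (unif n) (branch n k X)) p T (\<lambda>y. \<Sum>b\<in>{..<n}. 1 / real n * vB p n k X b y)"
      proof (rule HS_bind[OF _ _ _ _ fT])
        show "NN (unif n) p" by (rule NN_AOK[OF AOK_unif pr])
        show "NN (branch n k X b) p" for b by (rule NN_AOK[OF AOK_branch[OF n] pr])
        show "HS (unif n) p {..<n} (\<lambda>_. 1 / real n)" using HS_unif[OF pr, of m] m by simp
        show "HS (branch n k X b) p T (vB p n k X b)" if "b \<in> {..<n}" for b
          using HS_branch[OF n pr ps XK] that by (simp add: T_def)
      qed
      then show ?thesis using True by (simp add: g_def)
    qed
  qed
  then show ?thesis unfolding T_def by (rule HS_cong) (simp add: vR_def g_def)
qed

lemma HS_alg:
  assumes n: "0 < n" and pr: "\<forall>i<n. 0 \<le> p i \<and> p i \<le> 1" and ps: "(\<Sum>i<n. p i) = real k"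
    and lt: "vR p n k None < 1"
  shows "HS (alg n k) p (KS n k) (\<lambda>U. vR p n k (Some U) / (1 - vR p n k None))"
  unfolding alg_def
  by (rule HS_loop[OF AOK_round[OF n] pr round_Nil[OF n] HS_round[OF n pr ps] lt finite_KS])


lemma wt_swap:
  assumes X: "X \<subseteq> {..<n}" and a: "a \<in> X" and b: "b \<notin> X" "b < n"
  shows "wt p n X * ((1 - p a) * p b) = wt p n (insert b (X - {a})) * ((1 - p b) * p a)"
proof -
  define X' where "X' = insert b (X - {a})"
  have an: "a < n" using X a by auto
  have ab: "a \<noteq> b" using a b by auto
  define f where "f Y j = (if j \<in> Y then p j else 1 - p j)" for Y j
  have dec: "wt p n Y = f Y a * (f Y b * (\<Prod>j\<in>{..<n} - {a} - {b}. f Y j))" for Y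
  proof -
    have "wt p n Y = (\<Prod>j\<in>{..<n}. f Y j)" by (simp add: wt_def f_def)
    also have "\<dots> = f Y a * (\<Prod>j\<in>{..<n} - {a}. f Y j)" using an by (simp add: prod.remove)
    also have "(\<Prod>j\<in>{..<n} - {a}. f Y j) = f Y b * (\<Prod>j\<in>{..<n} - {a} - {b}. f Y j)"
      using b ab by (intro prod.remove) auto
    finally show ?thesis .
  qed
  have R: "(\<Prod>j\<in>{..<n} - {a} - {b}. f X j) = (\<Prod>j\<in>{..<n} - {a} - {b}. f X' j)"
    by (rule prod.cong) (auto simp: f_def X'_def)
  have fa: "f X a = p a" "f X' a = 1 - p a" using a ab by (auto simp: f_def X'_def)
  have fb: "f X b = 1 - p b" "f X' b = p b" using b by (auto simp: f_def X'_def)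
  show ?thesis unfolding X'_def[symmetric] dec[of X] dec[of X'] R fa fb
    by (simp add: algebra_simps)
qed

definition Tr :: "nat \<Rightarrow> nat \<Rightarrow> (nat set \<times> nat \<times> nat) set" where
  "Tr n k = Sigma (KS n k) (\<lambda>X. X \<times> ({..<n} - X))"

definition th :: "nat set \<times> nat \<times> nat \<Rightarrow> nat set \<times> nat \<times> nat" where
  "th t = (case t of (X, a, b) \<Rightarrow> (insert b (X - {a}), b, a))"

lemma th_Tr: "t \<in> Tr n k \<Longrightarrow> th t \<in> Tr n k"
proof -
  assume "t \<in> Tr n k"
  then obtain X a b where t: "t = (X, a, b)" "X \<in> KS n k" "a \<in> X" "b \<notin> X" "b < n"
    by (auto simp: Tr_def)
  have "a < n" using KS_sub[OF t(2)] t(3) by auto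
  then show ?thesis using t swap_KS[OF t(2,3,4,5)] by (auto simp: Tr_def th_def)
qed

lemma th_th: "t \<in> Tr n k \<Longrightarrow> th (th t) = t"
proof -
  assume "t \<in> Tr n k"
  then obtain X a b where t: "t = (X, a, b)" "a \<in> X" "b \<notin> X"
    by (auto simp: Tr_def)
  have "insert a (insert b (X - {a}) - {b}) = X" using t by auto
  then show ?thesis using t by (simp add: th_def)
qed

lemma bij_th: "bij_betw th (Tr n k) (Tr n k)"
  by (rule bij_betwI[where g=th]) (auto intro: th_Tr th_th)

lemma finite_Tr: "finite (Tr n k)"
  unfolding Tr_def by (rule finite_SigmaI[OF finite_KS]) (auto intro: KS_fin)

lemma double_sum_prod: "(\<Sum>a\<in>A. \<Sum>b\<in>B. c * (f a * g b)) = (c::real) * ((\<Sum>a\<in>A. f a) * (\<Sum>b\<in>B. g b))"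
proof -
  have e1: "(\<Sum>a\<in>A. f a) * (\<Sum>b\<in>B. g b) = (\<Sum>a\<in>A. \<Sum>b\<in>B. f a * g b)" by (rule sum_product)
  have e2: "c * (\<Sum>a\<in>A. \<Sum>b\<in>B. f a * g b) = (\<Sum>a\<in>A. c * (\<Sum>b\<in>B. f a * g b))" by (rule sum_distrib_left)
  have e3: "(\<Sum>a\<in>A. c * (\<Sum>b\<in>B. f a * g b)) = (\<Sum>a\<in>A. \<Sum>b\<in>B. c * (f a * g b))"
    by (rule sum.cong[OF refl]) (rule sum_distrib_left)
  show ?thesis by (simp only: e1 e2 e3)
qed

lemma sampford:
  assumes ps: "(\<Sum>i<n. p i) = real k" and i: "i < n"
  shows "(\<Sum>X\<in>KS n k. wt p n X * sX p X * ind (i \<in> X)) = p i * (\<Sum>X\<in>KS n k. wt p n X * sX p X)"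
proof -
  define W where "W t = (case t of (X, a, b) \<Rightarrow> wt p n X * ((1 - p a) * p b))" for t
  have swap: "(\<Sum>t\<in>Tr n k. W t * ind (fst (snd t) = i)) = (\<Sum>t\<in>Tr n k. W t * ind (snd (snd t) = i))"
  proof -
    have "(\<Sum>t\<in>Tr n k. W t * ind (fst (snd t) = i)) = (\<Sum>t\<in>Tr n k. W (th t) * ind (fst (snd (th t)) = i))"
      using sum.reindex_bij_betw[OF bij_th, of "\<lambda>t. W t * ind (fst (snd t) = i)"] by simp
    also have "\<dots> = (\<Sum>t\<in>Tr n k. W t * ind (snd (snd t) = i))"
    proof (rule sum.cong[OF refl])
      fix t assume "t \<in> Tr n k"
      then obtain X a b where t: "t = (X, a, b)" "X \<in> KS n k" "a \<in> X" "b \<notin> X" "b < n"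
        by (auto simp: Tr_def)
      have "W (th t) = W t"
        using wt_swap[OF KS_sub[OF t(2)] t(3,4,5)] t(1) by (simp add: W_def th_def)
      then show "W (th t) * ind (fst (snd (th t)) = i) = W t * ind (snd (snd t) = i)"
        using t(1) by (simp add: th_def)
    qed
    finally show ?thesis .
  qed
  have nest: "(\<Sum>t\<in>Tr n k. F t) = (\<Sum>X\<in>KS n k. \<Sum>a\<in>X. \<Sum>b\<in>{..<n} - X. F (X, a, b))" for F
  proof -
    have "(\<Sum>X\<in>KS n k. \<Sum>ab\<in>X \<times> ({..<n} - X). F (X, ab))
        = (\<Sum>(X, ab)\<in>Sigma (KS n k) (\<lambda>X. X \<times> ({..<n} - X)). F (X, ab))"
      by (rule sum.Sigma) (auto intro: finite_KS KS_fin)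
    then have "(\<Sum>t\<in>Tr n k. F t) = (\<Sum>X\<in>KS n k. \<Sum>ab\<in>X \<times> ({..<n} - X). F (X, ab))"
      by (simp add: Tr_def)
    also have "\<dots> = (\<Sum>X\<in>KS n k. \<Sum>a\<in>X. \<Sum>b\<in>{..<n} - X. F (X, a, b))"
      by (rule sum.cong[OF refl]) (auto simp: sum.cartesian_product KS_fin)
    finally show ?thesis .
  qed
  have L: "(\<Sum>t\<in>Tr n k. W t * ind (fst (snd t) = i)) = (\<Sum>X\<in>KS n k. wt p n X * sX p X * (ind (i \<in> X) * (1 - p i)))"
  proof -
    have "(\<Sum>t\<in>Tr n k. W t * ind (fst (snd t) = i))
        = (\<Sum>X\<in>KS n k. \<Sum>a\<in>X. \<Sum>b\<in>{..<n} - X. wt p n X * ((1 - p a) * p b) * ind (a = i))"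
      by (simp add: nest W_def)
    also have "\<dots> = (\<Sum>X\<in>KS n k. \<Sum>a\<in>X. \<Sum>b\<in>{..<n} - X. wt p n X * (((1 - p a) * ind (a = i)) * p b))"
      by (intro sum.cong refl) (simp add: algebra_simps)
    also have "\<dots> = (\<Sum>X\<in>KS n k. wt p n X * ((\<Sum>a\<in>X. (1 - p a) * ind (a = i)) * (\<Sum>b\<in>{..<n} - X. p b)))"
      by (simp only: double_sum_prod)
    also have "\<dots> = (\<Sum>X\<in>KS n k. wt p n X * sX p X * (ind (i \<in> X) * (1 - p i)))"
    proof (rule sum.cong[OF refl])
      fix X assume X: "X \<in> KS n k"
      have "(\<Sum>a\<in>X. (1 - p a) * ind (a = i)) = ind (i \<in> X) * (1 - p i)"
        using KS_fin[OF X] by (simp add: ind_def sum.delta' if_distrib[of "\<lambda>x. (1 - p _) * x"] cong: if_cong)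
      then show "wt p n X * ((\<Sum>a\<in>X. (1 - p a) * ind (a = i)) * (\<Sum>b\<in>{..<n} - X. p b))
          = wt p n X * sX p X * (ind (i \<in> X) * (1 - p i))"
        using tX[OF X ps] by simp
    qed
    finally show ?thesis .
  qed
  have R: "(\<Sum>t\<in>Tr n k. W t * ind (snd (snd t) = i)) = (\<Sum>X\<in>KS n k. wt p n X * sX p X * ((1 - ind (i \<in> X)) * p i))"
  proof -
    have "(\<Sum>t\<in>Tr n k. W t * ind (snd (snd t) = i))
        = (\<Sum>X\<in>KS n k. \<Sum>a\<in>X. \<Sum>b\<in>{..<n} - X. wt p n X * ((1 - p a) * p b) * ind (b = i))"
      by (simp add: nest W_def)
    also have "\<dots> = (\<Sum>X\<in>KS n k. \<Sum>a\<in>X. \<Sum>b\<in>{..<n} - X. wt p n X * ((1 - p a) * (p b * ind (b = i))))"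
      by (intro sum.cong refl) (simp add: algebra_simps)
    also have "\<dots> = (\<Sum>X\<in>KS n k. wt p n X * ((\<Sum>a\<in>X. (1 - p a)) * (\<Sum>b\<in>{..<n} - X. p b * ind (b = i))))"
      by (simp only: double_sum_prod)
    also have "\<dots> = (\<Sum>X\<in>KS n k. wt p n X * sX p X * ((1 - ind (i \<in> X)) * p i))"
    proof (rule sum.cong[OF refl])
      fix X assume X: "X \<in> KS n k"
      have "(\<Sum>b\<in>{..<n} - X. p b * ind (b = i)) = (\<Sum>b\<in>{..<n} - X. if b = i then p b else 0)"
        by (rule sum.cong) (auto simp: ind_def)
      also have "\<dots> = (if i \<in> {..<n} - X then p i else 0)" by (rule sum.delta) simp
      also have "\<dots> = (1 - ind (i \<in> X)) * p i" using i by (simp add: ind_def)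
      finally have "(\<Sum>b\<in>{..<n} - X. p b * ind (b = i)) = (1 - ind (i \<in> X)) * p i" .
      then show "wt p n X * ((\<Sum>a\<in>X. (1 - p a)) * (\<Sum>b\<in>{..<n} - X. p b * ind (b = i)))
          = wt p n X * sX p X * ((1 - ind (i \<in> X)) * p i)"
        by (simp add: sX_def)
    qed
    finally show ?thesis .
  qed
  have "(\<Sum>X\<in>KS n k. wt p n X * sX p X * (ind (i \<in> X) * (1 - p i)))
      = (\<Sum>X\<in>KS n k. wt p n X * sX p X * ((1 - ind (i \<in> X)) * p i))"
    using swap L R by simp
  then have "(\<Sum>X\<in>KS n k. wt p n X * sX p X * ind (i \<in> X)) - p i * (\<Sum>X\<in>KS n k. wt p n X * sX p X * ind (i \<in> X))
      = p i * (\<Sum>X\<in>KS n k. wt p n X * sX p X) - p i * (\<Sum>X\<in>KS n k. wt p n X * sX p X * ind (i \<in> X))"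
    by (simp add: algebra_simps sum_subtractf sum_distrib_left)
  then show ?thesis by simp
qed


locale setting =
  fixes n k :: nat and p :: "nat \<Rightarrow> real"
  assumes k1: "1 \<le> k" and kn: "k < n" and pr: "\<forall>i<n. 0 \<le> p i \<and> p i \<le> 1"
    and ps: "(\<Sum>i<n. p i) = real k"
begin

lemma n0: "0 < n" using k1 kn by simp

lemma sX_nonneg: "X \<in> KS n k \<Longrightarrow> 0 \<le> sX p X"
proof -
  assume X: "X \<in> KS n k"
  have sub: "X \<subseteq> {..<n}" by (rule KS_sub[OF X])
  show ?thesis unfolding sX_def
  proof (rule sum_nonneg)
    fix a assume "a \<in> X"
    then have "a < n" using sub by auto
    then show "0 \<le> 1 - p a" using pr by auto
  qed
qed

lemma L_ra:
  assumes X: "X \<in> KS n k" and b: "b \<in> {..<n} - X"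
  shows "p b * (\<Sum>a\<in>X. (1 - p a) / sX p X) = p b"
proof (cases "sX p X = 0")
  case True
  have "(\<Sum>b\<in>{..<n} - X. p b) = 0" using tX[OF X ps] True by simp
  then have "p b = 0" using b pr by (subst (asm) sum_nonneg_eq_0_iff) auto
  then show ?thesis by simp
next
  case False
  have "(\<Sum>a\<in>X. (1 - p a) / sX p X) = sX p X / sX p X"
    by (simp only: sum_divide_distrib[symmetric]) (simp add: sX_def)
  then show ?thesis using False by simp
qed

lemma L_ri:
  assumes X: "X \<in> KS n k" and i: "i \<in> X"
  shows "(\<Sum>b\<in>{..<n} - X. p b) * ((1 - p i) / sX p X) = 1 - p i"
proof (cases "sX p X = 0")
  case True
  have "1 - p i = 0"
    using True KS_fin[OF X] i KS_sub[OF X] pr unfolding sX_def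
    by (subst (asm) sum_nonneg_eq_0_iff) auto
  then show ?thesis by simp
next
  case False
  then show ?thesis using tX[OF X ps] by simp
qed

lemma vB_None:
  assumes X: "X \<in> KS n k" and b: "b < n"
  shows "vB p n k X b None = (if b \<in> X then 1 - 1 / real k else 1 - p b)"
  using b by (simp add: vB_def vC_def ind_def)

lemma vB_Some:
  assumes X: "X \<in> KS n k" and b: "b < n"
  shows "(\<Sum>U\<in>KS n k. vB p n k X b (Some U) * \<phi> U) =
    (if b \<in> X then \<phi> X / real k else p b * (\<Sum>a\<in>X. (1 - p a) / sX p X * \<phi> (insert b (X - {a}))))"
proof (cases "b \<in> X")
  case True
  have "(\<Sum>U\<in>KS n k. vB p n k X b (Some U) * \<phi> U) = (\<Sum>U\<in>KS n k. if U = X then \<phi> X / real k else 0)"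
    by (rule sum.cong) (auto simp: vB_def ind_def True)
  also have "\<dots> = \<phi> X / real k" using X by (simp add: sum.delta finite_KS)
  finally show ?thesis using True by simp
next
  case bX: False
  define ra where "ra a = (if a \<in> X then (1 - p a) / sX p X else 0)" for a
  have "(\<Sum>U\<in>KS n k. vB p n k X b (Some U) * \<phi> U)
      = (\<Sum>U\<in>KS n k. p b * (\<Sum>a<n. ra a * ind (U = insert b (X - {a})) * \<phi> U))"
    by (rule sum.cong) (auto simp: vB_def vC_def ind_def bX b ra_def sum_distrib_right)
  also have "\<dots> = p b * (\<Sum>a<n. \<Sum>U\<in>KS n k. ra a * ind (U = insert b (X - {a})) * \<phi> U)"
    by (simp add: sum_distrib_left[symmetric] sum.swap[of _ "KS n k"])
  also have "(\<Sum>a<n. \<Sum>U\<in>KS n k. ra a * ind (U = insert b (X - {a})) * \<phi> U)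
      = (\<Sum>a<n. if a \<in> X then (1 - p a) / sX p X * \<phi> (insert b (X - {a})) else 0)"
  proof (rule sum.cong[OF refl])
    fix a assume a: "a \<in> {..<n}"
    show "(\<Sum>U\<in>KS n k. ra a * ind (U = insert b (X - {a})) * \<phi> U)
        = (if a \<in> X then (1 - p a) / sX p X * \<phi> (insert b (X - {a})) else 0)"
    proof (cases "a \<in> X")
      case True
      have V: "insert b (X - {a}) \<in> KS n k" by (rule swap_KS[OF X True bX b])
      have "(\<Sum>U\<in>KS n k. ra a * ind (U = insert b (X - {a})) * \<phi> U)
          = (\<Sum>U\<in>KS n k. if U = insert b (X - {a}) then ra a * \<phi> (insert b (X - {a})) else 0)"
        by (rule sum.cong) (auto simp: ind_def)
      also have "\<dots> = ra a * \<phi> (insert b (X - {a}))" using V by (simp add: sum.delta finite_KS)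
      finally show ?thesis using True by (simp add: ra_def)
    next
      case False then show ?thesis by (simp add: ra_def)
    qed
  qed
  also have "\<dots> = (\<Sum>a\<in>X. (1 - p a) / sX p X * \<phi> (insert b (X - {a})))"
  proof -
    have "{..<n} \<inter> X = X" using KS_sub[OF X] by blast
    then show ?thesis by (simp add: sum.inter_restrict[symmetric])
  qed
  finally show ?thesis using bX by simp
qed

definition SB :: "(nat set \<Rightarrow> real) \<Rightarrow> nat set \<Rightarrow> real" where
  "SB \<phi> X = (\<Sum>b<n. \<Sum>U\<in>KS n k. vB p n k X b (Some U) * \<phi> U)"

lemma split_n: "X \<in> KS n k \<Longrightarrow> (\<Sum>b<n. f b) = (\<Sum>b\<in>X. f b) + (\<Sum>b\<in>{..<n} - X. f b)"
proof -
  assume X: "X \<in> KS n k"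
  have sub: "X \<subseteq> {..<n}" by (rule KS_sub[OF X])
  show ?thesis by (simp add: sum.subset_diff[OF sub] add.commute)
qed

lemma split_if_n:
  assumes X: "X \<in> KS n k"
  shows "(\<Sum>b<n. if b \<in> X then f b else g b) = (\<Sum>b\<in>X. f b) + (\<Sum>b\<in>{..<n} - X. g b)"
proof -
  have "(\<Sum>b<n. if b \<in> X then f b else g b) = (\<Sum>b\<in>X. if b \<in> X then f b else g b)
      + (\<Sum>b\<in>{..<n} - X. if b \<in> X then f b else g b)" by (rule split_n[OF X])
  moreover have "(\<Sum>b\<in>X. if b \<in> X then f b else g b) = (\<Sum>b\<in>X. f b)" by (rule sum.cong) auto
  moreover have "(\<Sum>b\<in>{..<n} - X. if b \<in> X then f b else g b) = (\<Sum>b\<in>{..<n} - X. g b)"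
    by (rule sum.cong) auto
  ultimately show ?thesis by simp
qed

lemma SB_one: "X \<in> KS n k \<Longrightarrow> SB (\<lambda>_. 1) X = 1 + sX p X"
proof -
  assume X: "X \<in> KS n k"
  have "SB (\<lambda>_. 1) X = (\<Sum>b<n. if b \<in> X then 1 / real k else p b * (\<Sum>a\<in>X. (1 - p a) / sX p X))"
    unfolding SB_def
  proof (rule sum.cong[OF refl])
    fix b assume "b \<in> {..<n}"
    then have b: "b < n" by simp
    from vB_Some[OF X b, of "\<lambda>_. 1"]
    show "(\<Sum>U\<in>KS n k. vB p n k X b (Some U) * 1) = (if b \<in> X then 1 / real k else p b * (\<Sum>a\<in>X. (1 - p a) / sX p X))"
      by simp
  qed
  also have "\<dots> = (\<Sum>b\<in>X. 1 / real k) + (\<Sum>b\<in>{..<n} - X. p b * (\<Sum>a\<in>X. (1 - p a) / sX p X))"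
    by (rule split_if_n[OF X])
  also have "(\<Sum>b\<in>{..<n} - X. p b * (\<Sum>a\<in>X. (1 - p a) / sX p X)) = (\<Sum>b\<in>{..<n} - X. p b)"
    by (rule sum.cong[OF refl]) (rule L_ra[OF X])
  also have "(\<Sum>b\<in>X. 1 / real k) = 1" using KS_card[OF X] k1 by simp
  finally show ?thesis using tX[OF X ps] by simp
qed

lemma SB_i:
  assumes X: "X \<in> KS n k" and i: "i < n"
  shows "SB (\<lambda>U. ind (i \<in> U)) X = ind (i \<in> X) * sX p X + p i"
proof (cases "i \<in> X")
  case True
  have "SB (\<lambda>U. ind (i \<in> U)) X = (\<Sum>b<n. if b \<in> X then 1 / real k
      else p b * (\<Sum>a\<in>X. (1 - p a) / sX p X * (if a = i then 0 else 1)))"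
    unfolding SB_def
  proof (rule sum.cong[OF refl])
    fix b assume b: "b \<in> {..<n}"
    show "(\<Sum>U\<in>KS n k. vB p n k X b (Some U) * ind (i \<in> U)) = (if b \<in> X then 1 / real k
      else p b * (\<Sum>a\<in>X. (1 - p a) / sX p X * (if a = i then 0 else 1)))"
      using b True by (auto simp: vB_Some[OF X] ind_def intro!: sum.cong)
  qed
  also have "\<dots> = (\<Sum>b\<in>X. 1 / real k) + (\<Sum>b\<in>{..<n} - X. p b * (\<Sum>a\<in>X. (1 - p a) / sX p X * (if a = i then 0 else 1)))"
    by (rule split_if_n[OF X])
  also have "(\<Sum>b\<in>X. 1 / real k) = 1" using KS_card[OF X] k1 by simp
  also have "(\<Sum>b\<in>{..<n} - X. p b * (\<Sum>a\<in>X. (1 - p a) / sX p X * (if a = i then 0 else 1)))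
      = (\<Sum>b\<in>{..<n} - X. p b * (\<Sum>a\<in>X. (1 - p a) / sX p X) - p b * ((1 - p i) / sX p X))"
  proof (rule sum.cong[OF refl])
    fix b
    have "(\<Sum>a\<in>X. (1 - p a) / sX p X * (if a = i then 0 else 1))
        = (\<Sum>a\<in>X. (1 - p a) / sX p X) - (1 - p i) / sX p X"
    proof -
      have "(\<Sum>a\<in>X. (1 - p a) / sX p X) = (1 - p i) / sX p X + (\<Sum>a\<in>X - {i}. (1 - p a) / sX p X)"
        using KS_fin[OF X] True by (simp add: sum.remove)
      moreover have "(\<Sum>a\<in>X. (1 - p a) / sX p X * (if a = i then 0 else 1)) = (\<Sum>a\<in>X - {i}. (1 - p a) / sX p X)"
        using KS_fin[OF X] True by (simp add: sum.remove)
      ultimately show ?thesis by simp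
    qed
    then show "p b * (\<Sum>a\<in>X. (1 - p a) / sX p X * (if a = i then 0 else 1))
        = p b * (\<Sum>a\<in>X. (1 - p a) / sX p X) - p b * ((1 - p i) / sX p X)"
      by (simp only: right_diff_distrib)
  qed
  also have "\<dots> = (\<Sum>b\<in>{..<n} - X. p b * (\<Sum>a\<in>X. (1 - p a) / sX p X)) - (\<Sum>b\<in>{..<n} - X. p b * ((1 - p i) / sX p X))"
    by (rule sum_subtractf)
  also have "\<dots> = (\<Sum>b\<in>{..<n} - X. p b) - (\<Sum>b\<in>{..<n} - X. p b) * ((1 - p i) / sX p X)"
  proof -
    have e1: "(\<Sum>b\<in>{..<n} - X. p b * (\<Sum>a\<in>X. (1 - p a) / sX p X)) = (\<Sum>b\<in>{..<n} - X. p b)"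
      by (rule sum.cong[OF refl], rule L_ra[OF X])
    have e2: "(\<Sum>b\<in>{..<n} - X. p b * ((1 - p i) / sX p X)) = (\<Sum>b\<in>{..<n} - X. p b) * ((1 - p i) / sX p X)"
      by (rule sum_distrib_right[symmetric])
    show ?thesis by (simp only: e1 e2)
  qed
  also have "\<dots> = sX p X - (1 - p i)" using L_ri[OF X True] tX[OF X ps] by linarith
  finally show ?thesis using True by (simp add: ind_def)
next
  case False
  have "SB (\<lambda>U. ind (i \<in> U)) X = (\<Sum>b<n. if b \<in> X then 0
      else p b * (\<Sum>a\<in>X. (1 - p a) / sX p X) * ind (b = i))"
    unfolding SB_def
  proof (rule sum.cong[OF refl])
    fix b assume b: "b \<in> {..<n}"
    show "(\<Sum>U\<in>KS n k. vB p n k X b (Some U) * ind (i \<in> U)) = (if b \<in> X then 0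
      else p b * (\<Sum>a\<in>X. (1 - p a) / sX p X) * ind (b = i))"
      using b False by (auto simp: vB_Some[OF X] ind_def sum_distrib_right intro!: sum.cong)
  qed
  also have "\<dots> = (\<Sum>b\<in>X. 0) + (\<Sum>b\<in>{..<n} - X. p b * (\<Sum>a\<in>X. (1 - p a) / sX p X) * ind (b = i))"
    by (rule split_if_n[OF X])
  also have "\<dots> = (\<Sum>b\<in>{..<n} - X. p b * ind (b = i))"
    by (simp, rule sum.cong[OF refl]) (simp add: L_ra[OF X])
  also have "\<dots> = (\<Sum>b\<in>{..<n} - X. if b = i then p b else 0)"
    by (rule sum.cong) (auto simp: ind_def)
  also have "\<dots> = p i" using i False by (simp add: sum.delta)
  finally show ?thesis using False by (simp add: ind_def)
qed

end


context setting
begin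

lemma KS_filter: "KS n k = {X \<in> Pow {..<n}. card X = k}"
  by (auto simp: KS_def)

lemma E_gen: "(\<Sum>U\<in>KS n k. vR p n k (Some U) * \<phi> U) = (\<Sum>X\<in>KS n k. wt p n X * SB \<phi> X) / real n"
proof -
  define G where "G X y = (if card X = k then (\<Sum>b<n. 1 / real n * vB p n k X b y) else ind (y = None))" for X y
  have "(\<Sum>U\<in>KS n k. vR p n k (Some U) * \<phi> U) = (\<Sum>U\<in>KS n k. \<Sum>X\<in>Pow {..<n}. wt p n X * G X (Some U) * \<phi> U)"
    by (simp add: vR_def G_def sum_distrib_right)
  also have "\<dots> = (\<Sum>X\<in>Pow {..<n}. \<Sum>U\<in>KS n k. wt p n X * G X (Some U) * \<phi> U)"
    by (rule sum.swap)
  also have "\<dots> = (\<Sum>X\<in>Pow {..<n}. if card X = k then wt p n X * SB \<phi> X / real n else 0)"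
  proof (rule sum.cong[OF refl])
    fix X assume "X \<in> Pow {..<n}"
    show "(\<Sum>U\<in>KS n k. wt p n X * G X (Some U) * \<phi> U) = (if card X = k then wt p n X * SB \<phi> X / real n else 0)"
    proof (cases "card X = k")
      case True
      have "(\<Sum>U\<in>KS n k. wt p n X * G X (Some U) * \<phi> U)
          = (\<Sum>U\<in>KS n k. \<Sum>b<n. wt p n X / real n * (vB p n k X b (Some U) * \<phi> U))"
        by (rule sum.cong[OF refl]) (simp add: G_def True sum_distrib_left sum_distrib_right mult.assoc)
      also have "\<dots> = (\<Sum>b<n. \<Sum>U\<in>KS n k. wt p n X / real n * (vB p n k X b (Some U) * \<phi> U))"
        by (rule sum.swap)
      also have "\<dots> = wt p n X / real n * SB \<phi> X"
        by (simp add: SB_def sum_distrib_left)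
      finally show ?thesis using True by simp
    next
      case False
      then show ?thesis by (simp add: G_def ind_def)
    qed
  qed
  also have "\<dots> = (\<Sum>X\<in>KS n k. wt p n X * SB \<phi> X / real n)"
    unfolding KS_filter by (rule sum.inter_filter[symmetric]) simp
  also have "\<dots> = (\<Sum>X\<in>KS n k. wt p n X * SB \<phi> X) / real n"
    by (rule sum_divide_distrib[symmetric])
  finally show ?thesis .
qed

lemma vB_None_sum:
  assumes X: "X \<in> KS n k"
  shows "(\<Sum>b<n. 1 / real n * vB p n k X b None) = 1 - (1 + sX p X) / real n"
proof -
  have "(\<Sum>b<n. vB p n k X b None) = (\<Sum>b<n. if b \<in> X then 1 - 1 / real k else 1 - p b)"
    by (rule sum.cong[OF refl]) (simp add: vB_None[OF X])
  also have "\<dots> = (\<Sum>b\<in>X. 1 - 1 / real k) + (\<Sum>b\<in>{..<n} - X. 1 - p b)"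
    by (rule split_if_n[OF X])
  also have "(\<Sum>b\<in>X. 1 - 1 / real k) = real k - 1"
    using KS_card[OF X] k1 by (simp add: field_simps)
  also have "(\<Sum>b\<in>{..<n} - X. 1 - p b) = real (n - k) - sX p X"
  proof -
    have "card ({..<n} - X) = n - k" using KS_sub[OF X] KS_card[OF X] KS_fin[OF X]
      by (simp add: card_Diff_subset)
    then show ?thesis using tX[OF X ps] by (simp add: sum_subtractf)
  qed
  finally have "(\<Sum>b<n. vB p n k X b None) = real k - 1 + (real (n - k) - sX p X)" .
  moreover have "real (n - k) = real n - real k" using kn by simp
  ultimately have "(\<Sum>b<n. vB p n k X b None) = real n - 1 - sX p X" by simp
  have "(\<Sum>b<n. 1 / real n * vB p n k X b None) = 1 / real n * (\<Sum>b<n. vB p n k X b None)"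
    by (rule sum_distrib_left[symmetric])
  also have "\<dots> = 1 / real n * (real n - 1 - sX p X)" using \<open>(\<Sum>b<n. vB p n k X b None) = real n - 1 - sX p X\<close> by simp
  also have "\<dots> = 1 - (1 + sX p X) / real n" using n0 by (simp add: field_simps)
  finally show ?thesis .
qed

lemma E0: "vR p n k None = 1 - (\<Sum>X\<in>KS n k. wt p n X * (1 + sX p X)) / real n"
proof -
  have "vR p n k None = (\<Sum>X\<in>Pow {..<n}. wt p n X - (if card X = k then wt p n X * (1 + sX p X) / real n else 0))"
    unfolding vR_def
  proof (rule sum.cong[OF refl])
    fix X assume X: "X \<in> Pow {..<n}"
    show "wt p n X * (if card X = k then \<Sum>b<n. 1 / real n * vB p n k X b None else ind (None = None))
        = wt p n X - (if card X = k then wt p n X * (1 + sX p X) / real n else 0)"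
    proof (cases "card X = k")
      case True
      then have XK: "X \<in> KS n k" using X by (simp add: KS_def)
      show ?thesis using True by (simp only: if_True vB_None_sum[OF XK] simp_thms) (simp add: algebra_simps)
    next
      case False then show ?thesis by (simp add: ind_def)
    qed
  qed
  also have "\<dots> = 1 - (\<Sum>X\<in>Pow {..<n}. if card X = k then wt p n X * (1 + sX p X) / real n else 0)"
    by (simp add: sum_subtractf sum_wt)
  also have "(\<Sum>X\<in>Pow {..<n}. if card X = k then wt p n X * (1 + sX p X) / real n else 0)
      = (\<Sum>X\<in>KS n k. wt p n X * (1 + sX p X) / real n)"
    unfolding KS_filter by (rule sum.inter_filter[symmetric]) simp
  finally show ?thesis by (simp add: sum_divide_distrib)
qed

lemma wt_nonneg: "0 \<le> wt p n X"
  unfolding wt_def using pr by (intro prod_nonneg) auto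

lemma exists_pos: "\<exists>X\<in>KS n k. 0 < wt p n X"
proof -
  define Ones where "Ones = {i. i < n \<and> p i = 1}"
  define Pos where "Pos = {i. i < n \<and> 0 < p i}"
  have finOnes: "finite Ones" and finPos: "finite Pos" by (auto simp: Ones_def Pos_def)
  have OnesPos: "Ones \<subseteq> Pos" by (auto simp: Ones_def Pos_def)
  have "real (card Ones) = (\<Sum>i\<in>Ones. p i)" by (simp add: Ones_def)
  also have "\<dots> \<le> (\<Sum>i<n. p i)" using pr by (intro sum_mono2) (auto simp: Ones_def)
  finally have cOnes: "card Ones \<le> k" using ps by simp
  have "(\<Sum>i<n. p i) = (\<Sum>i\<in>Pos. p i)"
  proof (rule sum.mono_neutral_right)
    show "\<forall>i\<in>{..<n} - Pos. p i = 0"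
    proof
      fix i assume "i \<in> {..<n} - Pos"
      then have "i < n" "\<not> 0 < p i" by (auto simp: Pos_def)
      then show "p i = 0" using pr by force
    qed
  qed (auto simp: Pos_def)
  then have "real k = (\<Sum>i\<in>Pos. p i)" using ps by simp
  also have "\<dots> \<le> (\<Sum>i\<in>Pos. 1)" using pr by (intro sum_mono) (auto simp: Pos_def)
  finally have cPos: "k \<le> card Pos" by simp
  have "k - card Ones \<le> card (Pos - Ones)" using cPos OnesPos finOnes by (simp add: card_Diff_subset)
  then obtain B where B: "B \<subseteq> Pos - Ones" "card B = k - card Ones" "finite B"
    by (rule obtain_subset_with_card_n)
  define X where "X = Ones \<union> B"
  have XPos: "X \<subseteq> Pos" using B OnesPos by (auto simp: X_def)
  have "card X = card Ones + card B" unfolding X_def using B finOnes by (subst card_Un_disjoint) auto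
  then have cX: "card X = k" using B cOnes by simp
  have XK: "X \<in> KS n k" using XPos cX by (auto simp: KS_def Pos_def)
  have "0 < wt p n X"
    unfolding wt_def
  proof (rule prod_pos)
    fix i assume "i \<in> {..<n}"
    then have i: "i < n" by simp
    show "0 < (if i \<in> X then p i else 1 - p i)"
    proof (cases "i \<in> X")
      case True then show ?thesis using XPos by (auto simp: Pos_def)
    next
      case False
      then have "i \<notin> Ones" by (auto simp: X_def)
      then have "p i \<noteq> 1" using i by (auto simp: Ones_def)
      then show ?thesis using False pr i by auto
    qed
  qed
  then show ?thesis using XK by blast
qed

definition D where "D = (\<Sum>X\<in>KS n k. wt p n X * (1 + sX p X)) / real n"

lemma D_pos: "0 < D"
proof -
  obtain X where X: "X \<in> KS n k" "0 < wt p n X" using exists_pos by blast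
  have "0 < (\<Sum>X\<in>KS n k. wt p n X * (1 + sX p X))"
  proof (rule sum_pos2[OF finite_KS X(1)])
    show "0 < wt p n X * (1 + sX p X)" using X sX_nonneg[OF X(1)] by simp
    show "0 \<le> wt p n Y * (1 + sX p Y)" if "Y \<in> KS n k" for Y
      using wt_nonneg[of Y] sX_nonneg[OF that] by simp
  qed
  then show ?thesis using n0 by (simp add: D_def)
qed

lemma E_one: "(\<Sum>U\<in>KS n k. vR p n k (Some U)) = D"
  using E_gen[of "\<lambda>_. 1"] by (simp add: D_def SB_one cong: sum.cong)

lemma E_i:
  assumes i: "i < n"
  shows "(\<Sum>U\<in>KS n k \<inter> {U. i \<in> U}. vR p n k (Some U)) = p i * D"
proof -
  have "(\<Sum>U\<in>KS n k \<inter> {U. i \<in> U}. vR p n k (Some U)) = (\<Sum>U\<in>KS n k. vR p n k (Some U) * ind (i \<in> U))"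
    by (simp add: sum.inter_restrict[OF finite_KS] ind_def if_distrib cong: if_cong)
  also have "\<dots> = (\<Sum>X\<in>KS n k. wt p n X * (ind (i \<in> X) * sX p X + p i)) / real n"
    using E_gen[of "\<lambda>U. ind (i \<in> U)"] by (simp add: SB_i[OF _ i] cong: sum.cong)
  also have "(\<Sum>X\<in>KS n k. wt p n X * (ind (i \<in> X) * sX p X + p i))
      = (\<Sum>X\<in>KS n k. wt p n X * sX p X * ind (i \<in> X)) + p i * (\<Sum>X\<in>KS n k. wt p n X)"
    by (simp add: sum.distrib sum_distrib_left algebra_simps)
  also have "\<dots> = p i * (\<Sum>X\<in>KS n k. wt p n X * sX p X) + p i * (\<Sum>X\<in>KS n k. wt p n X)"
    by (simp add: sampford[OF ps i])
  also have "\<dots> = p i * (\<Sum>X\<in>KS n k. wt p n X * (1 + sX p X))"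
    by (simp add: sum.distrib algebra_simps)
  finally show ?thesis by (simp add: D_def)
qed

theorem main:
  shows "HS (alg n k) p (KS n k) (\<lambda>U. vR p n k (Some U) / D)"
    and "(\<Sum>U\<in>KS n k. vR p n k (Some U) / D) = 1"
    and "\<And>i. i < n \<Longrightarrow> (\<Sum>U\<in>KS n k \<inter> {U. i \<in> U}. vR p n k (Some U) / D) = p i"
proof -
  have e: "1 - vR p n k None = D" by (simp add: E0 D_def)
  have lt: "vR p n k None < 1" using e D_pos by simp
  show "HS (alg n k) p (KS n k) (\<lambda>U. vR p n k (Some U) / D)"
    using HS_alg[OF n0 pr ps lt] e by simp
  show "(\<Sum>U\<in>KS n k. vR p n k (Some U) / D) = 1"
    using E_one D_pos by (simp add: sum_divide_distrib[symmetric])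
  fix i assume i: "i < n"
  show "(\<Sum>U\<in>KS n k \<inter> {U. i \<in> U}. vR p n k (Some U) / D) = p i"
    using E_i[OF i] D_pos by (simp add: sum_divide_distrib[symmetric])
qed

end


definition conv :: "nat set gact \<Rightarrow> action" where
  "conv a = (case a of GFlip i \<Rightarrow> Flip i | GAux q \<Rightarrow> Aux q | GRet U \<Rightarrow> Stop U)"

lemma conv_Flip: "conv a = Flip i \<longleftrightarrow> a = GFlip i" by (cases a) (auto simp: conv_def)
lemma conv_Aux: "conv a = Aux q \<longleftrightarrow> a = GAux q" by (cases a) (auto simp: conv_def)
lemma conv_Stop: "conv a = Stop U \<longleftrightarrow> a = GRet U" by (cases a) (auto simp: conv_def)
lemma conv_is_stop: "is_stop (conv a) \<longleftrightarrow> isret a" by (cases a) (auto simp: conv_def is_stop_def)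

lemma step_prob_conv: "step_prob (\<lambda>h. conv (P h)) p h b = gstep P p h b"
  by (cases "P h") (auto simp: step_prob_def gstep_def aprob_def conv_def)

lemma reach_prob_conv: "reach_prob (\<lambda>h. conv (P h)) p = greach P p"
  by (rule ext) (simp add: reach_prob_def greach_def step_prob_conv)

theorem theorem3:
  fixes n k :: nat
  assumes "1 \<le> k" and "k < n"
  shows "\<exists>\<sigma> :: procedure. wf_procedure n \<sigma> \<and>
     (\<forall>h U. \<sigma> h = Stop U \<longrightarrow> U \<subseteq> {..<n} \<and> card U = k) \<and>
     (\<forall>p :: nat \<Rightarrow> real.
        (\<forall>i<n. 0 \<le> p i \<and> p i \<le> 1) \<and> (\<Sum>i<n. p i) = real k \<longrightarrow>
          (reach_prob \<sigma> p has_sum 1) {h. is_stop (\<sigma> h)} \<and>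
          (\<forall>i<n. (reach_prob \<sigma> p has_sum p i) {h. \<exists>U. \<sigma> h = Stop U \<and> i \<in> U}))"
proof -
  have n0: "0 < n" using assms by simp
  define \<sigma> :: procedure where "\<sigma> = (\<lambda>h. conv (alg n k h))"
  have A: "AOK (alg n k) n" by (rule AOK_alg[OF n0])
  have wf: "wf_procedure n \<sigma>"
    unfolding wf_procedure_def
  proof (intro conjI allI impI)
    fix h i assume "\<sigma> h = Flip i"
    then have "alg n k h = GFlip i" by (simp add: \<sigma>_def conv_Flip)
    then show "i < n" using A unfolding AOK_def by blast
  next
    fix h q assume "\<sigma> h = Aux q"
    then have "alg n k h = GAux q" by (simp add: \<sigma>_def conv_Aux)
    then show "0 \<le> q" "q \<le> 1" using A unfolding AOK_def by blast+
  qed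
  have RVa: "RV (alg n k) (\<lambda>U. U \<in> KS n k)" by (rule RV_alg[OF n0])
  have st: "\<forall>h U. \<sigma> h = Stop U \<longrightarrow> U \<subseteq> {..<n} \<and> card U = k"
  proof (intro allI impI)
    fix h U assume "\<sigma> h = Stop U"
    then have "alg n k h = GRet U" by (simp add: \<sigma>_def conv_Stop)
    then have "U \<in> KS n k" using RVa unfolding RV_def by blast
    then show "U \<subseteq> {..<n} \<and> card U = k" by (simp add: KS_def)
  qed
  have pp: "(reach_prob \<sigma> p has_sum 1) {h. is_stop (\<sigma> h)} \<and>
          (\<forall>i<n. (reach_prob \<sigma> p has_sum p i) {h. \<exists>U. \<sigma> h = Stop U \<and> i \<in> U})"
    if pr: "\<forall>i<n. 0 \<le> p i \<and> p i \<le> 1" and ps: "(\<Sum>i<n. p i) = real k" for p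
  proof -
    interpret setting n k p
    proof
      show "1 \<le> k" by (rule assms(1))
      show "k < n" by (rule assms(2))
      show "\<forall>i<n. 0 \<le> p i \<and> p i \<le> 1" by (rule pr)
      show "(\<Sum>i<n. p i) = real k" by (rule ps)
    qed
    have R: "reach_prob \<sigma> p = greach (alg n k) p" unfolding \<sigma>_def by (rule reach_prob_conv)
    have H: "HS (alg n k) p (KS n k) (\<lambda>U. vR p n k (Some U) / D)" by (rule main(1))
    have "(greach (alg n k) p has_sum (\<Sum>U\<in>KS n k \<inter> UNIV. vR p n k (Some U) / D)) {h. \<exists>U\<in>UNIV. alg n k h = GRet U}"
      by (rule HS_set[OF H])
    moreover have "{h. \<exists>U\<in>UNIV. alg n k h = GRet U} = {h. is_stop (\<sigma> h)}"
      by (auto simp: \<sigma>_def conv_is_stop isret_iff)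
    ultimately have A: "(reach_prob \<sigma> p has_sum 1) {h. is_stop (\<sigma> h)}"
      using main(2) R by simp
    have B: "(reach_prob \<sigma> p has_sum p i) {h. \<exists>U. \<sigma> h = Stop U \<and> i \<in> U}" if i: "i < n" for i
    proof -
      have "(greach (alg n k) p has_sum (\<Sum>U\<in>KS n k \<inter> {U. i \<in> U}. vR p n k (Some U) / D))
          {h. \<exists>U\<in>{U. i \<in> U}. alg n k h = GRet U}"
        by (rule HS_set[OF H])
      moreover have "{h. \<exists>U\<in>{U. i \<in> U}. alg n k h = GRet U} = {h. \<exists>U. \<sigma> h = Stop U \<and> i \<in> U}"
        by (auto simp: \<sigma>_def conv_Stop)
      ultimately show ?thesis using main(3)[OF i] R by simp
    qed
    show ?thesis using A B by simp
  qed
  have pp': "\<forall>p :: nat \<Rightarrow> real.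
        (\<forall>i<n. 0 \<le> p i \<and> p i \<le> 1) \<and> (\<Sum>i<n. p i) = real k \<longrightarrow>
          (reach_prob \<sigma> p has_sum 1) {h. is_stop (\<sigma> h)} \<and>
          (\<forall>i<n. (reach_prob \<sigma> p has_sum p i) {h. \<exists>U. \<sigma> h = Stop U \<and> i \<in> U})"
  proof (intro allI impI)
    fix p :: "nat \<Rightarrow> real"
    assume "(\<forall>i<n. 0 \<le> p i \<and> p i \<le> 1) \<and> (\<Sum>i<n. p i) = real k"
    then show "(reach_prob \<sigma> p has_sum 1) {h. is_stop (\<sigma> h)} \<and>
          (\<forall>i<n. (reach_prob \<sigma> p has_sum p i) {h. \<exists>U. \<sigma> h = Stop U \<and> i \<in> U})"
      using pp by blast
  qed
  have "wf_procedure n \<sigma> \<and> (\<forall>h U. \<sigma> h = Stop U \<longrightarrow> U \<subseteq> {..<n} \<and> card U = k) \<and>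
     (\<forall>p :: nat \<Rightarrow> real.
        (\<forall>i<n. 0 \<le> p i \<and> p i \<le> 1) \<and> (\<Sum>i<n. p i) = real k \<longrightarrow>
          (reach_prob \<sigma> p has_sum 1) {h. is_stop (\<sigma> h)} \<and>
          (\<forall>i<n. (reach_prob \<sigma> p has_sum p i) {h. \<exists>U. \<sigma> h = Stop U \<and> i \<in> U}))"
    using wf st pp' by (intro conjI)
  then show ?thesis by (rule exI[where x=\<sigma>])
qed


end
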